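(* If $G$ is a $(3,2)$-critical graph that contains at least three odd cycles, then $G$ contains as a subgraph a subdivision of one of the multigraphs $K_2^{(4)}$, $K_4$, $K_3^{(2,2,1)}$, or $C_4^{(2,1,2,1)}$. Moreover, each such subdivision (arising in this way) contains at least two odd cycles.
   Context: All graphs are finite and simple. An odd cycle is a cycle (subgraph) of odd length. For a graph $G$, ${\rm es}_{\chi}(G)$ is the minimum number of edges of $G$ whose removal results in a spanning subgraph $G_1$ with $\chi(G_1)=\chi(G)-1$. $G$ is edge-stability critical if ${\rm es}_{\chi}(G-e)<{\rm es}_{\chi}(G)$ for every edge $e$. $G$ is $(3,2)$-critical if it is edge-stability critical with $\chi(G)=3$ and ${\rm es}_{\chi}(G)=2$. $K_2^{(4)}$ is the multigraph on two vertices joined by four parallel edges; $K_3^{(2,2,1)}$ is the multigraph on three vertices in which two of the pairs are joined by two parallel edges and the third pair by a single edge; $C_4^{(2,1,2,1)}$ is the multigraph obtained from the cycle $C_4$ by duplicating two of its non-consecutive edges. A subdivision of a multigraph replaces each edge by a path (of length at least $1$), the paths being internally disjoint. *)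

theory Defs
  imports Main
begin

definition simple_graph :: "'a set \<Rightarrow> 'a set set \<Rightarrow> bool" where
  "simple_graph V E \<longleftrightarrow> finite V \<and>
     (\<forall>e\<in>E. \<exists>u v. e = {u, v} \<and> u \<noteq> v \<and> u \<in> V \<and> v \<in> V)"

definition proper_colouring :: "'a set \<Rightarrow> 'a set set \<Rightarrow> ('a \<Rightarrow> nat) \<Rightarrow> nat \<Rightarrow> bool" where
  "proper_colouring V E c k \<longleftrightarrow>
     (\<forall>v\<in>V. c v < k) \<and> (\<forall>u v. {u, v} \<in> E \<longrightarrow> c u \<noteq> c v)"

definition colourable :: "'a set \<Rightarrow> 'a set set \<Rightarrow> nat \<Rightarrow> bool" where
  "colourable V E k \<longleftrightarrow> (\<exists>c. proper_colouring V E c k)"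

definition chromatic_number :: "'a set \<Rightarrow> 'a set set \<Rightarrow> nat" where
  "chromatic_number V E = (LEAST k. colourable V E k)"

definition es_chi :: "'a set \<Rightarrow> 'a set set \<Rightarrow> nat" where
  "es_chi V E = (LEAST k. \<exists>F. F \<subseteq> E \<and> card F = k \<and>
       chromatic_number V (E - F) = chromatic_number V E - 1)"

definition edge_stability_critical :: "'a set \<Rightarrow> 'a set set \<Rightarrow> bool" where
  "edge_stability_critical V E \<longleftrightarrow> (\<forall>e\<in>E. es_chi V (E - {e}) < es_chi V E)"

definition critical_3_2 :: "'a set \<Rightarrow> 'a set set \<Rightarrow> bool" where
  "critical_3_2 V E \<longleftrightarrow> edge_stability_critical V E \<and>
     chromatic_number V E = 3 \<and> es_chi V E = 2"

definition is_path :: "'a set set \<Rightarrow> 'a list \<Rightarrow> bool" where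
  "is_path E xs \<longleftrightarrow> xs \<noteq> [] \<and> distinct xs \<and>
     (\<forall>i. Suc i < length xs \<longrightarrow> {xs ! i, xs ! Suc i} \<in> E)"

definition path_edges :: "'a list \<Rightarrow> 'a set set" where
  "path_edges xs = {{xs ! i, xs ! Suc i} | i. Suc i < length xs}"

definition is_cycle :: "'a set set \<Rightarrow> 'a list \<Rightarrow> bool" where
  "is_cycle E xs \<longleftrightarrow> length xs \<ge> 3 \<and> distinct xs \<and>
     (\<forall>i < length xs. {xs ! i, xs ! (Suc i mod length xs)} \<in> E)"

definition cycle_edges :: "'a list \<Rightarrow> 'a set set" where
  "cycle_edges xs = {{xs ! i, xs ! (Suc i mod length xs)} | i. i < length xs}"

text \<open>Odd cycles of G, each cycle (as a subgraph) identified with its edge set.\<close>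

definition odd_cycles :: "'a set set \<Rightarrow> 'a set set set" where
  "odd_cycles E = {cycle_edges xs | xs. is_cycle E xs \<and> odd (length xs)}"

text \<open>A loopless multigraph: number n of vertices (named 0..n-1) and a list of
  edges (parallel edges = repeated entries).\<close>

type_synonym multigraph = "nat \<times> (nat \<times> nat) list"

definition mg_K2_4 :: multigraph where
  "mg_K2_4 = (2, [(0,1), (0,1), (0,1), (0,1)])"

definition mg_K4 :: multigraph where
  "mg_K4 = (4, [(0,1), (0,2), (0,3), (1,2), (1,3), (2,3)])"

definition mg_K3_221 :: multigraph where
  "mg_K3_221 = (3, [(0,1), (0,1), (1,2), (1,2), (0,2)])"

definition mg_C4_2121 :: multigraph where
  "mg_C4_2121 = (4, [(0,1), (0,1), (1,2), (2,3), (2,3), (3,0)])"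

text \<open>f maps branch vertices of H into G, and P k is the path of G replacing the
  k-th edge of H.  Paths are internally disjoint (from each other and from the branch
  vertices), and distinct paths use distinct edges (needed so that parallel edges
  give distinct paths in the simple graph G).\<close>

definition internal :: "'a list \<Rightarrow> 'a set" where
  "internal xs = set (butlast (tl xs))"

definition is_subdivision ::
  "'a set set \<Rightarrow> multigraph \<Rightarrow> (nat \<Rightarrow> 'a) \<Rightarrow> (nat \<Rightarrow> 'a list) \<Rightarrow> bool" where
  "is_subdivision E H f P \<longleftrightarrow>
     (let n = fst H; es = snd H in
       inj_on f {..<n} \<and>
       (\<forall>k < length es.
          is_path E (P k) \<and> length (P k) \<ge> 2 \<and>
          hd (P k) = f (fst (es ! k)) \<and> last (P k) = f (snd (es ! k)) \<and>
          internal (P k) \<inter> f ` {..<n} = {}) \<and>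
       (\<forall>k < length es. \<forall>l < length es. k \<noteq> l \<longrightarrow>
          internal (P k) \<inter> set (P l) = {} \<and> path_edges (P k) \<inter> path_edges (P l) = {}))"

definition subdivision_edges :: "multigraph \<Rightarrow> (nat \<Rightarrow> 'a list) \<Rightarrow> 'a set set" where
  "subdivision_edges H P = (\<Union>k < length (snd H). path_edges (P k))"

end

theory Submission
  imports Defs
begin
definition walk :: "'a set set \<Rightarrow> 'a list \<Rightarrow> bool" where
  "walk E xs \<longleftrightarrow> (\<forall>i. Suc i < length xs \<longrightarrow> {xs ! i, xs ! Suc i} \<in> E)"

definition proper :: "('a \<Rightarrow> bool) \<Rightarrow> 'a set set \<Rightarrow> bool" where
  "proper c F \<longleftrightarrow> (\<forall>u v. {u, v} \<in> F \<longrightarrow> c u \<noteq> c v)"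

lemma is_path_walk: "is_path E xs \<longleftrightarrow> xs \<noteq> [] \<and> distinct xs \<and> walk E xs"
  by (simp add: is_path_def walk_def)

lemma walk_Nil[simp]: "walk E []" and walk_single[simp]: "walk E [x]"
  by (auto simp: walk_def)

lemma walk_Cons2[simp]: "walk E (x # y # xs) \<longleftrightarrow> {x,y} \<in> E \<and> walk E (y # xs)"
proof
  assume a: "walk E (x # y # xs)"
  have "{x,y} \<in> E" using a[unfolded walk_def, rule_format, of 0] by simp
  moreover have "walk E (y # xs)" unfolding walk_def
  proof (intro allI impI)
    fix i assume "Suc i < length (y # xs)"
    then show "{(y # xs) ! i, (y # xs) ! Suc i} \<in> E"
      using a[unfolded walk_def, rule_format, of "Suc i"] by simp
  qed
  ultimately show "{x,y} \<in> E \<and> walk E (y # xs)" by blast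
next
  assume a: "{x,y} \<in> E \<and> walk E (y # xs)"
  show "walk E (x # y # xs)" unfolding walk_def
  proof (intro allI impI)
    fix i assume i: "Suc i < length (x # y # xs)"
    show "{(x # y # xs) ! i, (x # y # xs) ! Suc i} \<in> E"
    proof (cases i)
      case 0 then show ?thesis using a by simp
    next
      case (Suc j) then show ?thesis using a i unfolding walk_def by simp
    qed
  qed
qed

lemma pe_Nil[simp]: "path_edges [] = {}" and pe_single[simp]: "path_edges [x] = {}"
  by (auto simp: path_edges_def)

lemma pe_Cons2[simp]: "path_edges (x # y # xs) = insert {x,y} (path_edges (y # xs))"
proof
  show "path_edges (x # y # xs) \<subseteq> insert {x,y} (path_edges (y # xs))"
  proof
    fix e assume "e \<in> path_edges (x # y # xs)"
    then obtain i where i: "Suc i < length (x#y#xs)" "e = {(x#y#xs) ! i, (x#y#xs) ! Suc i}"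
      unfolding path_edges_def by blast
    show "e \<in> insert {x,y} (path_edges (y # xs))"
    proof (cases i)
      case 0 then show ?thesis using i by simp
    next
      case (Suc j) then show ?thesis using i unfolding path_edges_def by auto
    qed
  qed
next
  show "insert {x,y} (path_edges (y # xs)) \<subseteq> path_edges (x # y # xs)"
  proof
    fix e assume "e \<in> insert {x,y} (path_edges (y # xs))"
    then consider "e = {x,y}" | j where "Suc j < length (y#xs)" "e = {(y#xs) ! j, (y#xs) ! Suc j}"
      unfolding path_edges_def by blast
    then show "e \<in> path_edges (x # y # xs)"
    proof cases
      case 1 then show ?thesis unfolding path_edges_def
        by (rule_tac CollectI, rule_tac x=0 in exI) simp
    next
      case 2 then show ?thesis unfolding path_edges_def
        by (rule_tac CollectI, rule_tac x="Suc j" in exI) simp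
    qed
  qed
qed

lemma walk_join:
  assumes "X \<noteq> []" "Z \<noteq> []" "last X = hd Z"
  shows "walk E (X @ tl Z) \<longleftrightarrow> walk E X \<and> walk E Z"
  using assms
proof (induction X rule: induct_list012)
  case 1 then show ?case by simp
next
  case (2 x) then show ?case by (cases Z) auto
next
  case (3 x y zs) then show ?case by simp
qed

lemma pe_join:
  assumes "X \<noteq> []" "Z \<noteq> []" "last X = hd Z"
  shows "path_edges (X @ tl Z) = path_edges X \<union> path_edges Z"
  using assms
proof (induction X rule: induct_list012)
  case 1 then show ?case by simp
next
  case (2 x) then show ?case by (cases Z) auto
next
  case (3 x y zs) then show ?case by simp
qed

lemma walk_rev[simp]: "walk E (rev xs) \<longleftrightarrow> walk E xs"
proof (induction xs rule: induct_list012)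
  case (3 x y zs)
  have "rev (x # y # zs) = rev (y # zs) @ tl [y, x]" by simp
  moreover have "walk E (rev (y # zs) @ tl [y, x]) \<longleftrightarrow> walk E (rev (y # zs)) \<and> walk E [y, x]"
    by (rule walk_join) auto
  ultimately show ?case using 3 by (auto simp: insert_commute)
qed auto

lemma pe_rev[simp]: "path_edges (rev xs) = path_edges xs"
proof (induction xs rule: induct_list012)
  case (3 x y zs)
  have "rev (x # y # zs) = rev (y # zs) @ tl [y, x]" by simp
  moreover have "path_edges (rev (y # zs) @ tl [y, x]) = path_edges (rev (y # zs)) \<union> path_edges [y, x]"
    by (rule pe_join) auto
  ultimately show ?case using 3 by (auto simp: insert_commute)
qed auto

lemma is_path_rev[simp]: "is_path E (rev xs) \<longleftrightarrow> is_path E xs"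
  by (simp add: is_path_walk)

lemma pe_mem: "{u, v} \<in> path_edges xs \<Longrightarrow> u \<in> set xs \<and> v \<in> set xs"
  unfolding path_edges_def
  by (auto simp: doubleton_eq_iff)

lemma pe_mem': "e \<in> path_edges xs \<Longrightarrow> \<exists>u v. e = {u,v} \<and> u \<in> set xs \<and> v \<in> set xs \<and> (distinct xs \<longrightarrow> u \<noteq> v)"
proof -
  assume "e \<in> path_edges xs"
  then obtain i where i: "Suc i < length xs" "e = {xs ! i, xs ! Suc i}"
    unfolding path_edges_def by blast
  then show ?thesis
    by (intro exI[of _ "xs ! i"] exI[of _ "xs ! Suc i"]) (auto simp: nth_eq_iff_index_eq)
qed

lemma pe_walk: "walk E xs \<Longrightarrow> path_edges xs \<subseteq> E"
  unfolding path_edges_def walk_def by auto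

lemma decomp2: "length xs \<ge> 2 \<Longrightarrow> xs = hd xs # butlast (tl xs) @ [last xs]"
  by (cases xs) (auto simp: last_tl)

lemma internal_decomp[simp]: "internal (h # M @ [l]) = set M"
  by (simp add: internal_def)

lemma internal_short: "length ys < 2 \<Longrightarrow> internal ys = {}"
  unfolding internal_def by (cases ys) auto

lemma internal_rev[simp]: "internal (rev xs) = internal xs"
proof (cases "length xs \<ge> 2")
  case True
  then have "xs = hd xs # butlast (tl xs) @ [last xs]" by (rule decomp2)
  then obtain h M l where "xs = h # M @ [l]" by blast
  then show ?thesis by simp
next
  case False
  then show ?thesis by (simp add: internal_short)
qed

lemma set_internal:
  "length xs \<ge> 2 \<Longrightarrow> set xs = insert (hd xs) (insert (last xs) (internal xs))"
  by (subst decomp2, assumption) (auto simp: internal_def)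

lemma internal_subset: "internal xs \<subseteq> set xs"
  unfolding internal_def by (cases xs) (auto dest: in_set_butlastD)

lemma distinct_ends:
  assumes "distinct xs" "length xs \<ge> 2"
  shows "hd xs \<notin> internal xs \<and> last xs \<notin> internal xs \<and> hd xs \<noteq> last xs"
proof -
  have "xs = hd xs # butlast (tl xs) @ [last xs]" using assms(2) by (rule decomp2)
  then obtain h M l where e: "xs = h # M @ [l]" by blast
  have "distinct (h # M @ [l])" using assms(1) e by simp
  then show ?thesis using e by auto
qed

lemma walk_take: "walk E xs \<Longrightarrow> walk E (take k xs)"
  unfolding walk_def by auto

lemma walk_drop: "walk E xs \<Longrightarrow> walk E (drop k xs)"
  unfolding walk_def by auto

lemma path_take: "is_path E xs \<Longrightarrow> k > 0 \<Longrightarrow> is_path E (take k xs)"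
  by (auto simp: is_path_walk walk_take)

lemma internal_disj:
  assumes "distinct X" "length X \<ge> 2" "set X \<inter> set Y \<subseteq> {hd X, last X}"
  shows "internal X \<inter> set Y = {}"
  using assms distinct_ends[OF assms(1,2)] internal_subset[of X] by blast

lemma not_internal_end:
  assumes "distinct X" "length X \<ge> 2" "x \<in> set X" "x \<notin> internal X"
  shows "x = hd X \<or> x = last X"
  using set_internal[OF assms(2)] assms(3,4) by blast

lemma edj:
  assumes X: "is_path E X" "length X \<ge> 2" and Y: "is_path E Y" "length Y \<ge> 2"
    and d1: "internal X \<inter> set Y = {}" and d2: "internal Y \<inter> set X = {}"
    and e: "e \<in> path_edges X" "e \<in> path_edges Y"
  shows "length X = 2 \<and> length Y = 2 \<and> e = {hd X, last X} \<and> e = {hd Y, last Y}"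
proof -
  have key: "length Z = 2 \<and> e = {hd Z, last Z}"
    if Z: "is_path E Z" "length Z \<ge> 2" "e \<in> path_edges Z" "e \<subseteq> set Z - internal Z" for Z
  proof -
    obtain i where i: "Suc i < length Z" "e = {Z ! i, Z ! Suc i}"
      using Z(3) unfolding path_edges_def by blast
    have dZ: "distinct Z" using Z(1) by (simp add: is_path_def)
    have Zn: "0 < length Z" using Z(2) by linarith
    have a: "Z ! i = hd Z \<or> Z ! i = last Z" using not_internal_end[OF dZ Z(2)] Z(4) i by auto
    have b: "Z ! Suc i = hd Z \<or> Z ! Suc i = last Z" using not_internal_end[OF dZ Z(2)] Z(4) i by auto
    have hd: "hd Z = Z ! 0" using Z(2) by (cases Z) auto
    have la: "last Z = Z ! (length Z - 1)" using Z(2) by (intro last_conv_nth) auto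
    have "i = 0" using a
    proof
      assume "Z ! i = hd Z" then show ?thesis using nth_eq_iff_index_eq[OF dZ, of i 0] i hd Zn by simp
    next
      assume "Z ! i = last Z"
      then have "i = length Z - 1" using nth_eq_iff_index_eq[OF dZ, of i "length Z - 1"] i la by auto
      with i show ?thesis by simp
    qed
    moreover have "Suc i = length Z - 1" using b
    proof
      assume "Z ! Suc i = hd Z" then show ?thesis using nth_eq_iff_index_eq[OF dZ, of "Suc i" 0] i hd Zn by simp
    next
      assume "Z ! Suc i = last Z"
      then show "Suc i = length Z - 1" using nth_eq_iff_index_eq[OF dZ, of "Suc i" "length Z - 1"] i la by auto
    qed
    ultimately show ?thesis using i hd la by auto
  qed
  obtain u v where uv: "e = {u,v}" "u \<in> set X" "v \<in> set X" using pe_mem' e(1) by blast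
  have uvY: "u \<in> set Y" "v \<in> set Y" using pe_mem[of u v Y] e(2) uv by auto
  have "e \<subseteq> set X - internal X" using uv uvY d1 by auto
  moreover have "e \<subseteq> set Y - internal Y" using uv uvY d2 by auto
  ultimately show ?thesis using key X Y e by blast
qed

lemma split_path:
  assumes "is_path E P" "v \<in> internal P"
  shows "\<exists>P1 P2. is_path E P1 \<and> is_path E P2 \<and> length P1 \<ge> 2 \<and> length P2 \<ge> 2 \<and>
     hd P1 = hd P \<and> last P1 = v \<and> hd P2 = v \<and> last P2 = last P \<and>
     set P1 \<inter> set P2 = {v} \<and> set P1 \<union> set P2 = set P \<and>
     internal P = internal P1 \<union> internal P2 \<union> {v} \<and>
     internal P1 \<inter> internal P2 = {} \<and> v \<notin> internal P1 \<and> v \<notin> internal P2 \<and>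
     path_edges P = path_edges P1 \<union> path_edges P2 \<and> path_edges P1 \<inter> path_edges P2 = {}"
proof -
  have lP: "length P \<ge> 2" using assms(2) internal_short by (metis empty_iff not_le)
  obtain h M l where e: "P = h # M @ [l]" using decomp2[OF lP] by blast
  have "v \<in> set M" using assms(2) e by simp
  then obtain M1 M2 where M: "M = M1 @ v # M2" by (meson split_list)
  define P1 where "P1 = h # M1 @ [v]"
  define P2 where "P2 = v # M2 @ [l]"
  have PP: "P = P1 @ tl P2" unfolding P1_def P2_def e M by simp
  have dP: "distinct P" using assms(1) by (simp add: is_path_def)
  have wP: "walk E P" using assms(1) by (simp add: is_path_walk)
  have j: "last P1 = hd P2" "P1 \<noteq> []" "P2 \<noteq> []" unfolding P1_def P2_def by auto
  have w: "walk E P1" "walk E P2" using walk_join[OF j(2,3,1), of E] wP PP by auto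
  have d: "distinct P1" "distinct P2" using dP unfolding e M P1_def P2_def by auto
  have p: "is_path E P1" "is_path E P2" using w d j by (auto simp: is_path_walk)
  have s: "set P1 \<inter> set P2 = {v}" using dP unfolding e M P1_def P2_def by auto
  have iP: "internal P1 = set M1" "internal P2 = set M2" unfolding P1_def P2_def by simp_all
  have pe: "path_edges P = path_edges P1 \<union> path_edges P2" using pe_join[OF j(2,3,1)] PP by simp
  have l2: "length P1 \<ge> 2" "length P2 \<ge> 2" unfolding P1_def P2_def by auto
  have di: "internal P1 \<inter> set P2 = {}" "internal P2 \<inter> set P1 = {}"
    using dP unfolding e M P1_def P2_def by auto
  have ped: "path_edges P1 \<inter> path_edges P2 = {}"
  proof (rule ccontr)
    assume "path_edges P1 \<inter> path_edges P2 \<noteq> {}"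
    then obtain x where "x \<in> path_edges P1" "x \<in> path_edges P2" by blast
    from edj[OF p(1) l2(1) p(2) l2(2) di this] have "{hd P1, last P1} = {hd P2, last P2}" by metis
    then have "h = l" unfolding P1_def P2_def using dP e M by (auto simp: doubleton_eq_iff)
    then show False using dP e by simp
  qed
  have ii: "internal P = internal P1 \<union> internal P2 \<union> {v}"
  proof -
    have "internal P = set M" using e by simp
    then show ?thesis using iP M by auto
  qed
  have su: "set P1 \<union> set P2 = set P" unfolding e M P1_def P2_def by auto
  have vi: "v \<notin> internal P1" "v \<notin> internal P2" using iP d unfolding P1_def P2_def by auto
  have idj: "internal P1 \<inter> internal P2 = {}" using iP dP e M by auto
  have hl1: "hd P1 = hd P" unfolding P1_def e by simp
  have hl2: "last P1 = v" unfolding P1_def by simp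
  have hl3: "hd P2 = v" unfolding P2_def by simp
  have hl4: "last P2 = last P" unfolding P2_def e by simp
  note hl = hl1 hl2 hl3 hl4
  show ?thesis
    by (rule exI[of _ P1], rule exI[of _ P2], intro conjI) (fact p l2 s pe hl ii su vi idj ped)+
qed

lemma closed_nth:
  assumes "xs \<noteq> []" "i < length xs"
  shows "(xs @ [hd xs]) ! i = xs ! i" "(xs @ [hd xs]) ! Suc i = xs ! (Suc i mod length xs)"
proof -
  show "(xs @ [hd xs]) ! i = xs ! i" using assms by (simp add: nth_append)
  show "(xs @ [hd xs]) ! Suc i = xs ! (Suc i mod length xs)"
  proof (cases "Suc i < length xs")
    case True then show ?thesis by (simp add: nth_append)
  next
    case False then have "Suc i = length xs" using assms by simp
    then show ?thesis using assms by (simp add: nth_append hd_conv_nth)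
  qed
qed

lemma cycle_edges_closed:
  assumes "xs \<noteq> []" shows "cycle_edges xs = path_edges (xs @ [hd xs])"
  unfolding cycle_edges_def path_edges_def using closed_nth[OF assms]
  by (metis (no_types, lifting) length_append_singleton not_less_eq)

lemma is_cycle_alt:
  "is_cycle E xs \<longleftrightarrow> length xs \<ge> 3 \<and> distinct xs \<and> walk E (xs @ [hd xs])"
proof (cases "xs = []")
  case True then show ?thesis by (simp add: is_cycle_def)
next
  case False
  show ?thesis unfolding is_cycle_def walk_def using closed_nth[OF False]
    by (metis (no_types, lifting) length_append_singleton not_less_eq)
qed

lemma rotate1_cycle:
  "cycle_edges (rotate1 xs) = cycle_edges xs \<and> (is_cycle E (rotate1 xs) \<longleftrightarrow> is_cycle E xs)"
proof (cases xs)
  case Nil then show ?thesis by simp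
next
  case (Cons x ys)
  show ?thesis
  proof (cases ys)
    case Nil then show ?thesis using Cons by simp
  next
    case (Cons y zs)
    have r: "rotate1 xs = y # zs @ [x]" using Cons \<open>xs = x # ys\<close> by simp
    have c1: "rotate1 xs @ [hd (rotate1 xs)] = (y # zs @ [x]) @ tl [x, y]" using r by simp
    have c2: "xs @ [hd xs] = x # y # zs @ [x]" using Cons \<open>xs = x # ys\<close> by simp
    have pe1: "path_edges (rotate1 xs @ [hd (rotate1 xs)]) = path_edges (y # zs @ [x]) \<union> path_edges [x, y]"
      unfolding c1 by (rule pe_join) auto
    have w1: "walk E (rotate1 xs @ [hd (rotate1 xs)]) \<longleftrightarrow> walk E (y # zs @ [x]) \<and> walk E [x, y]"
      unfolding c1 by (rule walk_join) auto
    have ne: "rotate1 xs \<noteq> []" "xs \<noteq> []" using r Cons \<open>xs = x # ys\<close> by auto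
    show ?thesis
      unfolding cycle_edges_closed[OF ne(1)] cycle_edges_closed[OF ne(2)] is_cycle_alt
      using pe1 w1 c2 by (auto simp: insert_commute)
  qed
qed

lemma rotate_cycle:
  "cycle_edges (rotate k xs) = cycle_edges xs \<and> (is_cycle E (rotate k xs) \<longleftrightarrow> is_cycle E xs)"
  by (induction k) (auto simp: rotate1_cycle)

lemma cycle_path: "is_cycle E xs \<Longrightarrow> is_path E xs"
proof -
  assume c: "is_cycle E xs"
  then have "walk E (take (length xs) (xs @ [hd xs]))" by (intro walk_take) (simp add: is_cycle_alt)
  then show ?thesis using c by (auto simp: is_path_walk is_cycle_alt)
qed

lemma cycle_rot_to:
  assumes "is_cycle E xs" "v \<in> set xs"
  shows "\<exists>ys. is_cycle E ys \<and> cycle_edges ys = cycle_edges xs \<and> set ys = set xs \<and>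
             length ys = length xs \<and> hd ys = v"
proof -
  obtain i where i: "i < length xs" "xs ! i = v" using assms(2) by (meson in_set_conv_nth)
  have "hd (rotate i xs) = v" using i by (subst hd_rotate_conv_nth) auto
  then show ?thesis using rotate_cycle[of i xs E] assms(1)
    by (intro exI[of _ "rotate i xs"]) simp
qed

lemma cycle_edges_in: "is_cycle E xs \<Longrightarrow> cycle_edges xs \<subseteq> E"
  unfolding is_cycle_def cycle_edges_def by auto

lemma cycle_split:
  assumes c: "is_cycle E xs" and pq: "p \<in> set xs" "q \<in> set xs" "p \<noteq> q"
  shows "\<exists>A B. is_path E A \<and> is_path E B \<and> hd A = p \<and> last A = q \<and> hd B = p \<and> last B = q \<and>
     length A \<ge> 2 \<and> length B \<ge> 2 \<and>
     set A \<inter> set B = {p, q} \<and> set A \<union> set B = set xs \<and>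
     path_edges A \<union> path_edges B = cycle_edges xs \<and> length A + length B = length xs + 2"
proof -
  obtain ys where ys: "is_cycle E ys" "cycle_edges ys = cycle_edges xs" "set ys = set xs"
     "length ys = length xs" "hd ys = p"
    using cycle_rot_to[OF c pq(1)] by blast
  have dy: "distinct ys" and ly: "length ys \<ge> 3" and wy: "walk E (ys @ [hd ys])"
    using ys(1) by (auto simp: is_cycle_alt)
  obtain j where j: "j < length ys" "ys ! j = q" using pq(2) ys(3) by (metis in_set_conv_nth)
  have p0: "ys ! 0 = p" using ys(5) ly by (metis hd_conv_nth list.size(3) not_numeral_le_zero)
  have j0: "j > 0" using j p0 pq(3) by (cases j) auto
  define W where "W = ys @ [p]"
  define A where "A = take (Suc j) W"
  define B' where "B' = drop j W"
  have WAB: "W = A @ tl B'" unfolding A_def B'_def by (metis append_take_drop_id drop_Suc tl_drop)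
  have A: "A = take (Suc j) ys" unfolding A_def W_def using j by simp
  have B': "B' = drop j ys @ [p]" unfolding B'_def W_def using j by simp
  have ne: "A \<noteq> []" "B' \<noteq> []" using A B' ly by auto
  have lastA: "last A = q" using A j by (simp add: take_Suc_conv_app_nth)
  have hdB: "hd B' = q" using B' j by (simp add: hd_drop_conv_nth)
  have wW: "walk E W" using wy ys(5) W_def by simp
  have wAB: "walk E A" "walk E B'" using walk_join[OF ne lastA[folded hdB], of E] wW WAB by auto
  have dA: "distinct A" using A dy by simp
  have pnd: "p \<notin> set (drop j ys)"
  proof
    assume "p \<in> set (drop j ys)"
    then obtain k where "k < length ys - j" "drop j ys ! k = p" by (metis in_set_conv_nth length_drop)
    then have "ys ! (j + k) = ys ! 0" using p0 j by simp
    moreover have "j + k < length ys" "0 < length ys" using \<open>k < length ys - j\<close> by auto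
    ultimately show False using dy j0 nth_eq_iff_index_eq by fastforce
  qed
  have dB: "distinct B'" using B' dy pnd by simp
  have sAB: "set A \<inter> set B' = {p, q}"
  proof -
    have "set (take (Suc j) ys) \<inter> set (drop j ys) = {q}"
    proof -
      have ys_eq: "ys = take j ys @ q # drop (Suc j) ys" using j by (metis id_take_nth_drop)
      have "take (Suc j) ys = take j ys @ [q]" using j by (simp add: take_Suc_conv_app_nth)
      moreover have "drop j ys = q # drop (Suc j) ys" using j by (metis Cons_nth_drop_Suc)
      moreover have "distinct (take j ys @ q # drop (Suc j) ys)" using dy ys_eq by simp
      ultimately show ?thesis by auto
    qed
    moreover have "p \<in> set (take (Suc j) ys)" using ys(5) ly by (cases ys) auto
    ultimately show ?thesis using A B' by auto
  qed
  have yne: "ys \<noteq> []" using ly by (cases ys) auto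
  have pe: "path_edges A \<union> path_edges B' = cycle_edges xs"
    using pe_join[OF ne lastA[folded hdB]] WAB ys(2,5) cycle_edges_closed[OF yne] W_def by auto
  have sU: "set A \<union> set B' = set xs"
  proof -
    have sb: "set B' = insert (hd B') (set (tl B'))" using ne(2) by (cases B') auto
    have "last A \<in> set A" using ne(1) by simp
    then have "set A \<union> set B' = set W" unfolding WAB using sb lastA hdB by auto
    moreover have "p \<in> set ys" using ys(5) ly by (cases ys) auto
    ultimately show ?thesis using W_def ys(3) by auto
  qed
  have lens: "length A = Suc j" "length B' = length ys - j + 1" using A B' j by auto
  show ?thesis
  proof (rule exI[of _ A], rule exI[of _ "rev B'"], intro conjI)
    show "is_path E A" using wAB dA ne by (simp add: is_path_walk)
    show "is_path E (rev B')" using wAB dB ne by (simp add: is_path_walk)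
    show "hd A = p" using A ys(5) yne by (cases ys) auto
    show "last A = q" by (fact lastA)
    show "hd (rev B') = p" using B' by (simp add: hd_rev)
    show "last (rev B') = q" using hdB by (simp add: last_rev)
    show "length A \<ge> 2" using lens j0 by simp
    show "length (rev B') \<ge> 2" using lens j by simp
    show "set A \<inter> set (rev B') = {p, q}" using sAB by simp
    show "set A \<union> set (rev B') = set xs" using sU by simp
    show "path_edges A \<union> path_edges (rev B') = cycle_edges xs" using pe by simp
    show "length A + length (rev B') = length xs + 2" using lens ys(4) j by simp
  qed
qed

lemma paths_cycle:
  assumes X: "is_path E X" and Y: "is_path E Y" and h: "hd X = hd Y" and l: "last X = last Y"
    and hl: "hd X \<noteq> last X" and s: "set X \<inter> set Y = {hd X, last X}"
    and len: "length X + length Y \<ge> 5"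
  shows "\<exists>zs. is_cycle E zs \<and> cycle_edges zs = path_edges X \<union> path_edges Y \<and>
             length zs + 2 = length X + length Y"
proof -
  have lX: "length X \<ge> 2" using X hl by (cases X) (auto simp: is_path_def Suc_le_eq split: if_splits)
  have lY: "length Y \<ge> 2" using Y hl h l by (cases Y) (auto simp: is_path_def Suc_le_eq split: if_splits)
  obtain M where M: "rev Y = last X # M @ [hd X]"
    using decomp2[of "rev Y"] lY h l by (metis hd_rev last_rev length_rev)
  define zs where "zs = X @ M"
  have dX: "distinct X" and dY: "distinct Y" using X Y by (auto simp: is_path_def)
  have "distinct (rev Y)" using dY by simp
  then have dM: "distinct M" and Mn: "last X \<notin> set M" "hd X \<notin> set M" unfolding M by auto
  have MX: "set M \<inter> set X = {}"
  proof -
    have "set M \<subseteq> set Y" using M by (metis Un_iff list.set_intros(2) set_append set_rev subsetI)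
    show ?thesis
    proof (rule ccontr)
      assume "set M \<inter> set X \<noteq> {}"
      then obtain x where x: "x \<in> set M" "x \<in> set X" by blast
      then have "x \<in> set X \<inter> set Y" using \<open>set M \<subseteq> set Y\<close> by blast
      then have "x \<in> {hd X, last X}" using s by simp
      then show False using x Mn by blast
    qed
  qed
  have W: "zs @ [hd zs] = X @ tl (rev Y)" using M zs_def X by (cases X) (auto simp: is_path_def)
  have ne: "X \<noteq> []" "rev Y \<noteq> []" using lX lY by auto
  have j: "last X = hd (rev Y)" using M by simp
  have w: "walk E (zs @ [hd zs])" unfolding W using walk_join[OF ne j] X Y by (simp add: is_path_walk)
  have pe: "path_edges (zs @ [hd zs]) = path_edges X \<union> path_edges Y" unfolding W
    using pe_join[OF ne j] by simp
  have lz: "length zs + 2 = length X + length Y" unfolding zs_def using M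
    by (metis add_2_eq_Suc' add_Suc_right length_Cons length_append length_append_singleton length_rev)
  have "is_cycle E zs" unfolding is_cycle_alt using w dX dM MX lz len zs_def by auto
  moreover have "zs \<noteq> []" using zs_def ne by simp
  ultimately show ?thesis using pe lz by (intro exI[of _ zs]) (simp add: cycle_edges_closed)
qed

lemma walk_Cons: "walk E (x # xs) \<longleftrightarrow> walk E xs \<and> (xs \<noteq> [] \<longrightarrow> {x, hd xs} \<in> E)"
  by (cases xs) auto

lemma path_colour:
  "distinct xs \<Longrightarrow> xs \<noteq> [] \<Longrightarrow>
   \<exists>c. c (hd xs) = b \<and> c (last xs) = (b = odd (length xs)) \<and> proper c (path_edges xs)"
proof (induction xs arbitrary: b rule: induct_list012)
  case 1 then show ?case by simp
next
  case (2 x) then show ?case by (intro exI[of _ "\<lambda>_. b"]) (simp add: proper_def)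
next
  case (3 x y zs)
  obtain c where c: "c y = (\<not> b)" "c (last (y # zs)) = ((\<not> b) = odd (length (y # zs)))"
      "proper c (path_edges (y # zs))"
    using 3(2)[of "\<not> b"] 3(3) by auto
  define c' where "c' = c(x := b)"
  have xn: "x \<notin> set (y # zs)" using 3(3) by simp
  have "last (y # zs) \<noteq> x" using xn by (metis last_in_set list.discI)
  then have l: "c' (last (x # y # zs)) = (b = odd (length (x # y # zs)))"
    using c(2) unfolding c'_def by auto
  have "proper c' (path_edges (x # y # zs))"
    unfolding proper_def
  proof (intro allI impI)
    fix u v assume uv: "{u, v} \<in> path_edges (x # y # zs)"
    show "c' u \<noteq> c' v"
    proof (cases "{u, v} = {x, y}")
      case True
      then have "(u = x \<and> v = y) \<or> (u = y \<and> v = x)" by (auto simp: doubleton_eq_iff)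
      then show ?thesis using c(1) xn unfolding c'_def by auto
    next
      case False
      then have "{u, v} \<in> path_edges (y # zs)" using uv by simp
      then have "u \<in> set (y # zs) \<and> v \<in> set (y # zs)" by (rule pe_mem)
      then have "u \<in> set (y # zs)" "v \<in> set (y # zs)" by auto
      then show ?thesis using c(3) xn \<open>{u, v} \<in> path_edges (y # zs)\<close> unfolding c'_def proper_def
        by (metis fun_upd_other)
    qed
  qed
  moreover have "c' (hd (x # y # zs)) = b" by (simp add: c'_def)
  ultimately show ?case using l by blast
qed

lemma alt_colour:
  assumes "proper c (path_edges ws)" "i < length ws"
  shows "c (ws ! i) = (c (ws ! 0) = even i)"
  using assms(2)
proof (induction i)
  case 0 then show ?case by simp
next
  case (Suc i)
  have "{ws ! i, ws ! Suc i} \<in> path_edges ws" using Suc(2) unfolding path_edges_def by blast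
  then have "c (ws ! i) \<noteq> c (ws ! Suc i)" using assms(1) unfolding proper_def by blast
  then show ?case using Suc by auto
qed

lemma odd_closed_no_colour:
  assumes "ws \<noteq> []" "hd ws = last ws" "even (length ws)" "proper c (path_edges ws)"
  shows False
proof -
  define n where "n = length ws - 1"
  have n: "n < length ws" "odd n" using assms(1,3) n_def by (cases ws; auto)+
  have "c (ws ! n) = (c (ws ! 0) = even n)" by (rule alt_colour[OF assms(4) n(1)])
  moreover have "ws ! n = ws ! 0" using assms(1,2) n_def by (simp add: hd_conv_nth last_conv_nth)
  ultimately show False using n(2) by simp
qed

lemma odd_cycle_no_colour:
  assumes "is_cycle E xs" "odd (length xs)" "proper c (cycle_edges xs)"
  shows False
proof -
  have ne: "xs \<noteq> []" using assms(1) by (auto simp: is_cycle_def)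
  show False
    by (rule odd_closed_no_colour[of "xs @ [hd xs]" c]) (use assms ne cycle_edges_closed[OF ne] in auto)
qed

lemma closed_walk_odd_cycle:
  assumes "walk E ws" "length ws \<ge> 2" "hd ws = last ws" "even (length ws)" "\<forall>v. {v, v} \<notin> E"
  shows "\<exists>xs. is_cycle E xs \<and> odd (length xs)"
  using assms
proof (induction "length ws" arbitrary: ws rule: less_induct)
  case less
  define zs where "zs = butlast ws"
  define k where "k = length zs"
  have ne: "ws \<noteq> []" using less(3) by auto
  have wz: "ws = zs @ [last ws]" using ne zs_def by simp
  have k: "k = length ws - 1" unfolding k_def zs_def by simp
  have kodd: "odd k" using less(5) k less(3) by (cases "length ws") auto
  have zne: "zs \<noteq> []" using k less(3) k_def by auto
  have hz: "hd zs = hd ws" using wz zne by (metis hd_append2)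
  show ?case
  proof (cases "distinct zs")
    case True
    have wsz: "ws = zs @ [hd zs]" using wz hz less(4) by simp
    have "k \<noteq> 1"
    proof
      assume "k = 1"
      then obtain x where "zs = [x]" using k_def by (cases zs) auto
      then have "ws = [x, x]" using wsz by simp
      then show False using less(2) less(6) by simp
    qed
    then have "k \<ge> 3" using kodd by presburger
    then have "is_cycle E zs" unfolding is_cycle_alt using True wsz less(2) k_def by simp
    then show ?thesis using kodd k_def by blast
  next
    case False
    then obtain i j where ij: "i < j" "j < k" "zs ! i = zs ! j"
      using k_def by (metis distinct_conv_nth linorder_neqE_nat)
    have wij: "ws ! i = ws ! j" using ij wz k_def by (metis nth_append order.strict_trans)
    define W1 where "W1 = take (Suc (j - i)) (drop i ws)"
    define L where "L = take (Suc i) ws"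
    define R where "R = drop j ws"
    define W2 where "W2 = L @ tl R"
    have lws: "length ws = Suc k" using k ne by simp
    have lW1: "length W1 = Suc (j - i)" unfolding W1_def using ij lws by simp
    have lW2: "length W2 = length ws - (j - i)" unfolding W2_def L_def R_def using ij lws by simp
    have wW1: "walk E W1" unfolding W1_def by (intro walk_take walk_drop less(2))
    have LR: "L \<noteq> []" "R \<noteq> []" "last L = hd R"
      unfolding L_def R_def using ij lws wij
      by (auto simp: take_Suc_conv_app_nth hd_drop_conv_nth)
    have wW2: "walk E W2" unfolding W2_def using walk_join[OF LR] walk_take walk_drop less(2)
      L_def R_def by blast
    have hW1: "hd W1 = ws ! i" unfolding W1_def using ij lws by (simp add: hd_drop_conv_nth)
    have lastW1: "last W1 = ws ! j" unfolding W1_def using ij lws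
      by (simp add: last_conv_nth)
    have hW2: "hd W2 = hd ws" unfolding W2_def L_def using ne by simp
    have lastW2: "last W2 = last ws"
    proof (cases "tl R = []")
      case True then have "last W2 = last L" unfolding W2_def by simp
      also have "\<dots> = hd R" using LR by simp
      also have "\<dots> = last R" using True LR(2) by (cases R) auto
      finally show ?thesis unfolding R_def using ij lws by simp
    next
      case False then have "last W2 = last (tl R)" unfolding W2_def by simp
      also have "\<dots> = last R" using False by (cases R) auto
      finally show ?thesis unfolding R_def using ij lws by simp
    qed
    have sm: "length W1 + length W2 = Suc (length ws)" using lW1 lW2 ij lws by simp
    have par: "even (length W1) \<or> even (length W2)"
    proof (rule ccontr)
      assume "\<not> (even (length W1) \<or> even (length W2))"
      then have "even (length W1 + length W2)" by simp
      then show False using sm less(5) by simp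
    qed
    show ?thesis
    proof (cases "even (length W1)")
      case True
      show ?thesis
        by (rule less(1)[of W1]) (use lW1 lws ij wW1 hW1 lastW1 wij True less(6) in auto)
    next
      case False
      then have ev: "even (length W2)" using par by simp
      show ?thesis
        by (rule less(1)[of W2]) (use lW2 lws ij wW2 hW2 lastW2 less(4) ev less(6) in auto)
    qed
  qed
qed

definition reach :: "'a set set \<Rightarrow> 'a \<Rightarrow> 'a \<Rightarrow> bool" where
  "reach E u v \<longleftrightarrow> (\<exists>ws. walk E ws \<and> ws \<noteq> [] \<and> hd ws = u \<and> last ws = v)"

lemma reach_refl: "reach E v v"
  unfolding reach_def by (intro exI[of _ "[v]"]) simp

lemma reach_sym: "reach E u v \<Longrightarrow> reach E v u"
  unfolding reach_def by (metis walk_rev Nil_is_rev_conv hd_rev last_rev)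

lemma join_hd_last:
  assumes "X \<noteq> []" "Z \<noteq> []" "last X = hd Z"
  shows "hd (X @ tl Z) = hd X" "last (X @ tl Z) = last Z"
proof -
  show "hd (X @ tl Z) = hd X" using assms by simp
  show "last (X @ tl Z) = last Z"
  proof (cases "tl Z = []")
    case True then show ?thesis using assms by (cases Z) auto
  next
    case False then show ?thesis using assms by (cases Z) auto
  qed
qed

lemma reach_trans: "reach E u v \<Longrightarrow> reach E v w \<Longrightarrow> reach E u w"
proof -
  assume "reach E u v" "reach E v w"
  then obtain X Z where X: "walk E X" "X \<noteq> []" "hd X = u" "last X = v"
    and Z: "walk E Z" "Z \<noteq> []" "hd Z = v" "last Z = w" unfolding reach_def by blast
  have j: "last X = hd Z" using X Z by simp
  show ?thesis unfolding reach_def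
    by (intro exI[of _ "X @ tl Z"])
       (use walk_join[OF X(2) Z(2) j] join_hd_last[OF X(2) Z(2) j] X Z in auto)
qed

lemma reach_edge: "{u, v} \<in> E \<Longrightarrow> reach E u v"
  unfolding reach_def by (intro exI[of _ "[u, v]"]) simp

lemma bipartite:
  assumes noloop: "\<forall>v. {v, v} \<notin> E" and nocyc: "\<not> (\<exists>xs. is_cycle E xs \<and> odd (length xs))"
  shows "\<exists>c. proper c E"
proof -
  define root where "root v = Eps (reach E v)" for v
  define c where "c v = (\<exists>ws. walk E ws \<and> ws \<noteq> [] \<and> hd ws = root v \<and> last ws = v \<and> odd (length ws))" for v
  have "c u \<noteq> c v" if uv: "{u, v} \<in> E" for u v
  proof
    assume cuv: "c u = c v"
    have ruv: "reach E u v" using uv by (rule reach_edge)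
    have "reach E u = reach E v"
    proof
      fix w show "reach E u w = reach E v w"
        using ruv reach_sym reach_trans by metis
    qed
    then have rr: "root u = root v" unfolding root_def by simp
    define r where "r = root v"
    have "reach E v r" unfolding r_def root_def by (rule someI[of "reach E v" v]) (rule reach_refl)
    then have rv: "reach E r v" and ru: "reach E r u" using ruv reach_sym reach_trans by metis+
    show False
    proof (cases "c v")
      case True
      then obtain Wv where Wv: "walk E Wv" "Wv \<noteq> []" "hd Wv = r" "last Wv = v" "odd (length Wv)"
        unfolding c_def r_def by blast
      from True cuv obtain Wu where Wu: "walk E Wu" "Wu \<noteq> []" "hd Wu = r" "last Wu = u" "odd (length Wu)"
        unfolding c_def r_def rr by auto
      define Z where "Z = u # rev Wv"
      have wZ: "walk E Z" unfolding Z_def walk_Cons using Wv uv by (simp add: hd_rev)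
      have j: "last Wu = hd Z" "Z \<noteq> []" using Wu unfolding Z_def by auto
      have wW: "walk E (Wu @ tl Z)" using walk_join[OF Wu(2) j(2) j(1)] Wu wZ by simp
      have "\<exists>xs. is_cycle E xs \<and> odd (length xs)"
      proof (rule closed_walk_odd_cycle[OF wW])
        have "length Wu \<ge> 1" "length Wv \<ge> 1" using Wu Wv by (auto simp: Suc_le_eq)
        then show "length (Wu @ tl Z) \<ge> 2" unfolding Z_def by simp
      qed (use Wu Wv noloop in \<open>auto simp: Z_def last_rev\<close>)
      then show False using nocyc by blast
    next
      case False
      then have ncu: "\<not> c u" using cuv by simp
      obtain W where W: "walk E W" "W \<noteq> []" "hd W = r" "last W = u" using ru unfolding reach_def by blast
      have ev: "even (length W)" using ncu W unfolding c_def r_def rr by auto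
      have j: "last W = hd [u, v]" "[u, v] \<noteq> []" using W by auto
      have "walk E (W @ tl [u, v])" using walk_join[OF W(2) j(2) j(1)] W uv by simp
      then have "c v" unfolding c_def using W ev r_def by (intro exI[of _ "W @ [v]"]) auto
      then show False using False by simp
    qed
  qed
  then show ?thesis unfolding proper_def by blast
qed

lemma internal_nth:
  "x \<in> internal xs \<longleftrightarrow> (\<exists>i. 0 < i \<and> i < length xs - 1 \<and> x = xs ! i)"
proof -
  have l: "length (butlast (tl xs)) = length xs - 2" by simp
  have n: "i < length xs - 2 \<Longrightarrow> butlast (tl xs) ! i = xs ! Suc i" for i
    by (simp add: nth_butlast nth_tl)
  show ?thesis
  proof
    assume "x \<in> internal xs"
    then obtain i where "i < length xs - 2" "x = butlast (tl xs) ! i"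
      unfolding internal_def by (metis in_set_conv_nth l)
    then show "\<exists>i. 0 < i \<and> i < length xs - 1 \<and> x = xs ! i" using n by (intro exI[of _ "Suc i"]) auto
  next
    assume "\<exists>i. 0 < i \<and> i < length xs - 1 \<and> x = xs ! i"
    then obtain i where i: "0 < i" "i < length xs - 1" "x = xs ! i" by blast
    then have "x = butlast (tl xs) ! (i - 1)" "i - 1 < length xs - 2" using n[of "i - 1"] by auto
    then show "x \<in> internal xs" unfolding internal_def by (metis l nth_mem)
  qed
qed

lemma ear:
  assumes c: "is_cycle E ds" and F: "\<forall>e\<in>F. e \<subseteq> S"
    and g: "g \<in> cycle_edges ds" "g \<notin> F"
    and two: "u \<in> S" "v \<in> S" "u \<in> set ds" "v \<in> set ds" "u \<noteq> v"
  shows "\<exists>R. is_path E R \<and> length R \<ge> 2 \<and> hd R \<in> S \<and> last R \<in> S \<and> hd R \<noteq> last R \<and>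
             internal R \<inter> S = {} \<and> path_edges R \<inter> F = {} \<and> set R \<subseteq> set ds"
proof -
  define n where "n = length ds"
  have n3: "n \<ge> 3" and dd: "distinct ds" using c unfolding n_def by (auto simp: is_cycle_def)
  obtain k where k: "k < n" "g = {ds ! k, ds ! (Suc k mod n)}"
    using g(1) unfolding cycle_edges_def n_def by blast
  define ds1 where "ds1 = rotate (Suc k) ds"
  have c1: "is_cycle E ds1" using rotate_cycle c ds1_def by blast
  have l1: "length ds1 = n" and d1: "distinct ds1" and s1: "set ds1 = set ds"
    unfolding ds1_def n_def using dd by auto
  have nth1: "ds1 ! i = ds ! ((Suc k + i) mod n)" if "i < n" for i
    unfolding ds1_def n_def by (rule nth_rotate) (use that n_def in simp)
  have g1: "g = {ds1 ! (n - 1), ds1 ! 0}"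
  proof -
    have "(Suc k + (n - 1)) mod n = k" using k n3
      by (metis Suc_diff_1 add_Suc_shift add.commute mod_add_self2 mod_less zero_less_iff_neq_zero
          not_numeral_le_zero less_nat_zero_code)
    moreover have "(Suc k + 0) mod n = Suc k mod n" by simp
    ultimately show ?thesis using k nth1[of "n - 1"] nth1[of 0] n3 by (auto simp: insert_commute)
  qed
  define I where "I = {i. i < n \<and> ds1 ! i \<in> S}"
  have fI: "finite I" unfolding I_def by simp
  obtain iu where iu: "iu < n" "ds1 ! iu = u" using two(3) s1 l1 by (metis in_set_conv_nth)
  obtain iv where iv: "iv < n" "ds1 ! iv = v" using two(4) s1 l1 by (metis in_set_conv_nth)
  have I2: "iu \<in> I" "iv \<in> I" "iu \<noteq> iv" using iu iv two unfolding I_def by auto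
  define a where "a = Max I"
  define b where "b = Min I"
  have aI: "a \<in> I" and bI: "b \<in> I" unfolding a_def b_def using fI I2 by (auto intro: Max_in Min_in)
  have amax: "i \<in> I \<Longrightarrow> i \<le> a" for i unfolding a_def using fI by simp
  have bmin: "i \<in> I \<Longrightarrow> b \<le> i" for i unfolding b_def using fI by simp
  have ba: "b < a" using amax bmin I2 by (metis le_antisym le_trans nat_less_le)
  have an: "a < n" using aI unfolding I_def by simp
  define m where "m = n - a + b"
  have m1: "1 \<le> m" "m < n" unfolding m_def using an ba by auto
  define ds2 where "ds2 = rotate a ds1"
  have c2: "is_cycle E ds2" using rotate_cycle c1 ds2_def by blast
  have l2: "length ds2 = n" and d2: "distinct ds2" unfolding ds2_def using l1 d1 by auto
  have nth2: "ds2 ! i = ds1 ! ((a + i) mod n)" if "i < n" for i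
    unfolding ds2_def l1[symmetric] by (rule nth_rotate) (use that l1 in simp)
  define R where "R = take (Suc m) ds2"
  have lR: "length R = Suc m" unfolding R_def using m1 l2 by simp
  have Rn: "R ! i = ds2 ! i" if "i \<le> m" for i unfolding R_def using that by simp
  have pR: "is_path E R" unfolding R_def by (rule path_take[OF cycle_path[OF c2]]) simp
  have hR: "hd R = ds1 ! a" using Rn[of 0] nth2[of 0] lR an m1 by (cases R) auto
  have lastR: "last R = ds1 ! b"
  proof -
    have "R \<noteq> []" using lR by auto
    then have "last R = R ! m" using lR by (simp add: last_conv_nth)
    also have "\<dots> = ds1 ! ((a + m) mod n)" using Rn nth2 m1 by simp
    also have "(a + m) mod n = b" unfolding m_def using an ba by simp
    finally show ?thesis .
  qed
  have hl: "hd R \<noteq> last R"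
  proof -
    have "hd R = R ! 0" "last R = R ! m" using lR by (cases R; auto simp: last_conv_nth)+
    moreover have "R ! 0 \<noteq> R ! m" using Rn[of 0] Rn[of m] d2 l2 m1 by (simp add: nth_eq_iff_index_eq)
    ultimately show ?thesis by simp
  qed
  have inS: "R ! i \<notin> S" if "0 < i" "i < m" for i
  proof -
    have "R ! i = ds1 ! ((a + i) mod n)" using Rn nth2 that m1 by simp
    moreover have "(a + i) mod n \<notin> I"
    proof (cases "a + i < n")
      case True then show ?thesis using amax that by fastforce
    next
      case False
      then have "(a + i) mod n = a + i - n" using m1 that an by (simp add: mod_if)
      moreover have "a + i - n < b" using that False an unfolding m_def by simp
      ultimately show ?thesis using bmin by fastforce
    qed
    moreover have "(a + i) mod n < n" using n3 by simp
    ultimately show ?thesis unfolding I_def by auto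
  qed
  have intR: "internal R \<inter> S = {}"
  proof -
    have "x \<notin> S" if "x \<in> internal R" for x
      using that inS lR unfolding internal_nth by auto
    then show ?thesis by blast
  qed
  have peR: "path_edges R \<inter> F = {}"
  proof -
    have "e \<notin> F" if ein: "e \<in> path_edges R" for e
    proof -
      obtain i where i: "Suc i < length R" "e = {R ! i, R ! Suc i}"
        using ein unfolding path_edges_def by blast
      show ?thesis
      proof (cases "0 < i")
        case True
        then have "R ! i \<notin> S" using inS i lR by simp
        then show ?thesis using F i by auto
      next
        case False
        then have i0: "i = 0" by simp
        show ?thesis
        proof (cases "1 < m")
          case True
          then have "R ! 1 \<notin> S" using inS by simp
          then show ?thesis using F i i0 by auto
        next
          case False
          then have "m = 1" using m1 by simp
          then have "a = n - 1" "b = 0" using m_def ba an by auto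
          then have "e = {ds1 ! (n - 1), ds1 ! 0}"
            using i i0 Rn[of 0] Rn[of 1] nth2[of 0] nth2[of 1] \<open>m = 1\<close> n3 by simp
          then show ?thesis using g1 g(2) by simp
        qed
      qed
    qed
    then show ?thesis by blast
  qed
  have sR: "set R \<subseteq> set ds" unfolding R_def ds2_def ds1_def by (metis set_rotate set_take_subset)
  show ?thesis
    using pR lR hR lastR hl intR peR sR aI bI m1 unfolding I_def by (intro exI[of _ R]) auto
qed

fun pwd :: "'a list list \<Rightarrow> bool" where
  "pwd [] = True"
| "pwd (X # Xs) = ((\<forall>Y\<in>set Xs. internal X \<inter> internal Y = {} \<and> path_edges X \<inter> path_edges Y = {}) \<and> pwd Xs)"

lemma pwd_nth:
  "pwd Ps \<Longrightarrow> k < length Ps \<Longrightarrow> l < length Ps \<Longrightarrow> k \<noteq> l \<Longrightarrow>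
   internal (Ps ! k) \<inter> internal (Ps ! l) = {} \<and> path_edges (Ps ! k) \<inter> path_edges (Ps ! l) = {}"
proof (induction Ps arbitrary: k l)
  case Nil then show ?case by simp
next
  case (Cons X Xs)
  show ?case
  proof (cases k)
    case 0
    then obtain l' where "l = Suc l'" "l' < length Xs" using Cons by (cases l) auto
    then show ?thesis using Cons 0 by auto
  next
    case (Suc k')
    show ?thesis
    proof (cases l)
      case 0 then show ?thesis using Cons Suc by auto
    next
      case (Suc l') then show ?thesis using Cons \<open>k = Suc k'\<close> by auto
    qed
  qed
qed

definition good :: "'a set set \<Rightarrow> 'a set set \<Rightarrow> bool" where
  "good E F \<longleftrightarrow> (\<exists>H \<in> {mg_K2_4, mg_K4, mg_K3_221, mg_C4_2121}. \<exists>f P.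
           is_subdivision E H f P \<and> F \<subseteq> subdivision_edges H P)"

lemma subdiv_intro:
  assumes d: "distinct bs" and n: "length bs = n" and l: "length Ps = length es"
    and la: "list_all2 (\<lambda>e X. fst e < n \<and> snd e < n \<and> is_path E X \<and> length X \<ge> 2 \<and>
               hd X = bs ! fst e \<and> last X = bs ! snd e \<and> internal X \<inter> set bs = {}) es Ps"
    and pw: "pwd Ps"
  shows "is_subdivision E (n, es) (\<lambda>i. bs ! i) (\<lambda>k. Ps ! k)"
    and "subdivision_edges (n, es) (\<lambda>k. Ps ! k) = (\<Union>X\<in>set Ps. path_edges X)"
proof -
  have la': "\<And>k. k < length es \<Longrightarrow> fst (es ! k) < n \<and> snd (es ! k) < n \<and> is_path E (Ps ! k) \<and>
      length (Ps ! k) \<ge> 2 \<and> hd (Ps ! k) = bs ! fst (es ! k) \<and> last (Ps ! k) = bs ! snd (es ! k) \<and>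
      internal (Ps ! k) \<inter> set bs = {}"
    using la by (simp add: list_all2_conv_all_nth)
  have img: "(\<lambda>i. bs ! i) ` {..<n} = set bs" using n by (auto simp: set_conv_nth)
  have inj: "inj_on (\<lambda>i. bs ! i) {..<n}" using d n by (auto simp: inj_on_def nth_eq_iff_index_eq)
  have disj: "internal (Ps ! k) \<inter> set (Ps ! l) = {} \<and> path_edges (Ps ! k) \<inter> path_edges (Ps ! l) = {}"
    if "k < length es" "l < length es" "k \<noteq> l" for k l
  proof -
    have pw': "internal (Ps ! k) \<inter> internal (Ps ! l) = {} \<and> path_edges (Ps ! k) \<inter> path_edges (Ps ! l) = {}"
      using pwd_nth[OF pw] that l by auto
    have se: "set (Ps ! l) = insert (hd (Ps ! l)) (insert (last (Ps ! l)) (internal (Ps ! l)))"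
      using la'[OF that(2)] by (intro set_internal) simp
    have hb: "hd (Ps ! l) \<in> set bs" "last (Ps ! l) \<in> set bs" using la'[OF that(2)] n by auto
    have ib: "internal (Ps ! k) \<inter> set bs = {}" using la'[OF that(1)] by simp
    have "hd (Ps ! l) \<notin> internal (Ps ! k)" "last (Ps ! l) \<notin> internal (Ps ! k)"
      using hb ib by blast+
    then have "internal (Ps ! k) \<inter> set (Ps ! l) = {}" unfolding se using pw' by blast
    then show ?thesis using pw' by simp
  qed
  show "is_subdivision E (n, es) (\<lambda>i. bs ! i) (\<lambda>k. Ps ! k)"
    unfolding is_subdivision_def Let_def fst_conv snd_conv
  proof (intro conjI allI impI)
    show "inj_on (\<lambda>i. bs ! i) {..<n}" by (fact inj)
  next
    fix k assume k: "k < length es"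
    show "is_path E (Ps ! k)" "length (Ps ! k) \<ge> 2" "hd (Ps ! k) = bs ! fst (es ! k)"
      "last (Ps ! k) = bs ! snd (es ! k)" using la'[OF k] by auto
    show "internal (Ps ! k) \<inter> (\<lambda>i. bs ! i) ` {..<n} = {}" using la'[OF k] img by simp
  next
    fix k l assume "k < length es" "l < length es" "k \<noteq> l"
    then show "internal (Ps ! k) \<inter> set (Ps ! l) = {}" "path_edges (Ps ! k) \<inter> path_edges (Ps ! l) = {}"
      using disj by auto
  qed
  show "subdivision_edges (n, es) (\<lambda>k. Ps ! k) = (\<Union>X\<in>set Ps. path_edges X)"
    unfolding subdivision_edges_def using l by (auto simp: set_conv_nth)
qed

definition tp :: "'a set set \<Rightarrow> 'a \<Rightarrow> 'a \<Rightarrow> 'a list \<Rightarrow> bool" where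
  "tp E p q X \<longleftrightarrow> is_path E X \<and> length X \<ge> 2 \<and> hd X = p \<and> last X = q"

definition dj :: "'a list \<Rightarrow> 'a list \<Rightarrow> bool" where
  "dj X Y \<longleftrightarrow> internal X \<inter> set Y = {} \<and> internal Y \<inter> set X = {} \<and> path_edges X \<inter> path_edges Y = {}"

definition theta :: "'a set set \<Rightarrow> 'a \<Rightarrow> 'a \<Rightarrow> 'a list \<Rightarrow> 'a list \<Rightarrow> 'a list \<Rightarrow> bool" where
  "theta E p q A B R \<longleftrightarrow> p \<noteq> q \<and> tp E p q A \<and> tp E p q B \<and> tp E p q R \<and> dj A B \<and> dj A R \<and> dj B R"

definition ear :: "'a set set \<Rightarrow> 'a list \<Rightarrow> 'a list \<Rightarrow> 'a list \<Rightarrow> 'a list \<Rightarrow> bool" where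
  "ear E A B R T \<longleftrightarrow> is_path E T \<and> length T \<ge> 2 \<and> hd T \<noteq> last T \<and>
     hd T \<in> set A \<union> set B \<union> set R \<and> last T \<in> set A \<union> set B \<union> set R \<and>
     internal T \<inter> (set A \<union> set B \<union> set R) = {} \<and>
     path_edges T \<inter> (path_edges A \<union> path_edges B \<union> path_edges R) = {}"

definition splits :: "'a set set \<Rightarrow> 'a list \<Rightarrow> 'a \<Rightarrow> 'a list \<Rightarrow> 'a list \<Rightarrow> bool" where
  "splits E P v P1 P2 \<longleftrightarrow> is_path E P1 \<and> is_path E P2 \<and> length P1 \<ge> 2 \<and> length P2 \<ge> 2 \<and>
     hd P1 = hd P \<and> last P1 = v \<and> hd P2 = v \<and> last P2 = last P \<and>
     set P1 \<inter> set P2 = {v} \<and> set P1 \<union> set P2 = set P \<and>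
     internal P = internal P1 \<union> internal P2 \<union> {v} \<and>
     internal P1 \<inter> internal P2 = {} \<and> v \<notin> internal P1 \<and> v \<notin> internal P2 \<and>
     path_edges P = path_edges P1 \<union> path_edges P2 \<and> path_edges P1 \<inter> path_edges P2 = {}"

lemma splits_ex: "is_path E P \<Longrightarrow> v \<in> internal P \<Longrightarrow> \<exists>P1 P2. splits E P v P1 P2"
  unfolding splits_def by (rule split_path)

lemma splits_rev: "splits E P v P1 P2 \<Longrightarrow> splits E (rev P) v (rev P2) (rev P1)"
  unfolding splits_def by (auto simp: hd_rev last_rev)

lemma dj_sym: "dj X Y \<Longrightarrow> dj Y X" unfolding dj_def by auto
lemma dj_rev: "dj X Y \<Longrightarrow> dj (rev X) (rev Y)" unfolding dj_def by auto
lemma tp_rev: "tp E p q X \<Longrightarrow> tp E q p (rev X)" unfolding tp_def by (auto simp: hd_rev last_rev)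

lemma theta_sym:
  "theta E p q A B R \<Longrightarrow> theta E p q B A R"
  "theta E p q A B R \<Longrightarrow> theta E p q A R B"
  "theta E p q A B R \<Longrightarrow> theta E q p (rev A) (rev B) (rev R)"
  unfolding theta_def by (auto simp: dj_sym dj_rev tp_rev)

lemma ear_sym:
  "ear E A B R T \<Longrightarrow> ear E B A R T"
  "ear E A B R T \<Longrightarrow> ear E A R B T"
  "ear E A B R T \<Longrightarrow> ear E (rev A) (rev B) (rev R) T"
  "ear E A B R T \<Longrightarrow> ear E A B R (rev T)"
  unfolding ear_def by (auto simp: hd_rev last_rev)

lemma theta_facts:
  assumes "theta E p q A B R"
  shows "p \<noteq> q" "is_path E A" "is_path E B" "is_path E R"
    "length A \<ge> 2" "length B \<ge> 2" "length R \<ge> 2"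
    "hd A = p" "hd B = p" "hd R = p" "last A = q" "last B = q" "last R = q"
    "internal A \<inter> set B = {}" "internal A \<inter> set R = {}" "internal B \<inter> set A = {}"
    "internal B \<inter> set R = {}" "internal R \<inter> set A = {}" "internal R \<inter> set B = {}"
    "path_edges A \<inter> path_edges B = {}" "path_edges A \<inter> path_edges R = {}"
    "path_edges B \<inter> path_edges R = {}"
  using assms unfolding theta_def tp_def dj_def by auto

lemma int_disj: "internal X \<inter> set Y = {} \<Longrightarrow> internal X \<inter> internal Y = {}"
  using internal_subset[of Y] by blast

lemma ear_facts:
  assumes "ear E A B R T"
  shows "is_path E T" "length T \<ge> 2" "hd T \<noteq> last T"
    "hd T \<in> set A \<union> set B \<union> set R" "last T \<in> set A \<union> set B \<union> set R"
    "internal T \<inter> set A = {}" "internal T \<inter> set B = {}" "internal T \<inter> set R = {}"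
    "path_edges T \<inter> path_edges A = {}" "path_edges T \<inter> path_edges B = {}"
    "path_edges T \<inter> path_edges R = {}"
  using assms unfolding ear_def by auto

lemma path_ends:
  assumes "is_path E X" "length X \<ge> 2"
  shows "hd X \<notin> internal X" "last X \<notin> internal X" "hd X \<noteq> last X"
  using distinct_ends[of X] assms by (auto simp: is_path_def)

lemma good_intro:
  assumes d: "distinct bs" and n: "length bs = n" and l: "length Ps = length es"
    and la: "list_all2 (\<lambda>e X. fst e < n \<and> snd e < n \<and> is_path E X \<and> length X \<ge> 2 \<and>
               hd X = bs ! fst e \<and> last X = bs ! snd e \<and> internal X \<inter> set bs = {}) es Ps"
    and pw: "pwd Ps" and H: "(n, es) \<in> {mg_K2_4, mg_K4, mg_K3_221, mg_C4_2121}"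
    and F: "F \<subseteq> (\<Union>X\<in>set Ps. path_edges X)"
  shows "good E F"
  unfolding good_def
  by (rule bexI[OF _ H], rule exI[of _ "\<lambda>i. bs ! i"], rule exI[of _ "\<lambda>k. Ps ! k"])
     (use subdiv_intro[OF d n l la pw] F in simp)

lemma core_a:
  assumes th: "theta E p q A B R" and ea: "ear E A B R T" and st: "hd T = p" "last T = q"
  shows "good E (path_edges A \<union> path_edges B \<union> path_edges R)"
proof -
  note tf = theta_facts[OF th] and ef = ear_facts[OF ea]
  note ends = path_ends[OF tf(2,5)] path_ends[OF tf(3,6)] path_ends[OF tf(4,7)] path_ends[OF ef(1,2)]
  have ii: "internal A \<inter> internal B = {}" "internal A \<inter> internal R = {}" "internal B \<inter> internal R = {}"
     "internal A \<inter> internal T = {}" "internal B \<inter> internal T = {}" "internal R \<inter> internal T = {}"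
    using int_disj tf(14-19) ef(6-8) by blast+
  have S: "is_subdivision E (2, [(0,1),(0,1),(0,1),(0,1)]) (\<lambda>i. [p, q] ! i) (\<lambda>k. [A, B, R, T] ! k)"
   "subdivision_edges (2, [(0,1),(0,1),(0,1),(0,1)]) (\<lambda>k. [A, B, R, T] ! k) = (\<Union>X\<in>set [A, B, R, T]. path_edges X)"
  proof -
    have pp: "path_edges A \<inter> path_edges T = {}" "path_edges B \<inter> path_edges T = {}"
      "path_edges R \<inter> path_edges T = {}" using ef(9-11) by blast+
    have pr: "pwd [A, B, R, T]" using ii tf(20-22) pp by simp
    have la: "list_all2 (\<lambda>e X. fst e < 2 \<and> snd e < 2 \<and> is_path E X \<and> length X \<ge> 2 \<and>
               hd X = [p, q] ! fst e \<and> last X = [p, q] ! snd e \<and> internal X \<inter> set [p, q] = {})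
            [(0,1),(0,1),(0,1),(0,1)] [A, B, R, T]"
      using tf ef ends st by simp
    have d: "distinct [p, q]" using tf by simp
    show "is_subdivision E (2, [(0,1),(0,1),(0,1),(0,1)]) (\<lambda>i. [p, q] ! i) (\<lambda>k. [A, B, R, T] ! k)"
      by (rule subdiv_intro(1)[OF d _ _ la pr]) simp_all
    show "subdivision_edges (2, [(0,1),(0,1),(0,1),(0,1)]) (\<lambda>k. [A, B, R, T] ! k) = (\<Union>X\<in>set [A, B, R, T]. path_edges X)"
      by (rule subdiv_intro(2)[OF d _ _ la pr]) simp_all
  qed
  show ?thesis unfolding good_def mg_K2_4_def
    by (rule bexI[of _ "(2, [(0,1),(0,1),(0,1),(0,1)])"], rule exI, rule exI, rule conjI[OF S(1)]) (use S(2) in auto)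
qed

lemma splits_facts:
  assumes "splits E P v P1 P2"
  shows "is_path E P1" "is_path E P2" "length P1 \<ge> 2" "length P2 \<ge> 2"
     "hd P1 = hd P" "last P1 = v" "hd P2 = v" "last P2 = last P"
     "set P1 \<subseteq> set P" "set P2 \<subseteq> set P" "internal P1 \<subseteq> internal P" "internal P2 \<subseteq> internal P"
     "internal P1 \<inter> internal P2 = {}" "v \<notin> internal P1" "v \<notin> internal P2"
     "path_edges P1 \<subseteq> path_edges P" "path_edges P2 \<subseteq> path_edges P" "path_edges P1 \<inter> path_edges P2 = {}"
     "path_edges P = path_edges P1 \<union> path_edges P2" "internal P1 \<inter> set P2 = {}" "internal P2 \<inter> set P1 = {}"
proof -
  have a: "is_path E P1 \<and> is_path E P2 \<and> length P1 \<ge> 2 \<and> length P2 \<ge> 2 \<and>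
     hd P1 = hd P \<and> last P1 = v \<and> hd P2 = v \<and> last P2 = last P \<and>
     set P1 \<inter> set P2 = {v} \<and> set P1 \<union> set P2 = set P \<and>
     internal P = internal P1 \<union> internal P2 \<union> {v} \<and>
     internal P1 \<inter> internal P2 = {} \<and> v \<notin> internal P1 \<and> v \<notin> internal P2 \<and>
     path_edges P = path_edges P1 \<union> path_edges P2 \<and> path_edges P1 \<inter> path_edges P2 = {}"
    using assms unfolding splits_def .
  then show "is_path E P1" "is_path E P2" "length P1 \<ge> 2" "length P2 \<ge> 2"
     "hd P1 = hd P" "last P1 = v" "hd P2 = v" "last P2 = last P"
     "internal P1 \<inter> internal P2 = {}" "v \<notin> internal P1" "v \<notin> internal P2"
     "path_edges P1 \<inter> path_edges P2 = {}" "path_edges P = path_edges P1 \<union> path_edges P2"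
    by simp_all
  from a have s1: "set P1 \<inter> set P2 = {v}" "set P1 \<union> set P2 = set P"
    "internal P = internal P1 \<union> internal P2 \<union> {v}" by simp_all
  from s1(2) show "set P1 \<subseteq> set P" "set P2 \<subseteq> set P" by blast+
  from s1(3) show "internal P1 \<subseteq> internal P" "internal P2 \<subseteq> internal P" by blast+
  from a show "path_edges P1 \<subseteq> path_edges P" "path_edges P2 \<subseteq> path_edges P" by blast+
  have "internal P1 \<subseteq> set P1" "internal P2 \<subseteq> set P2" by (rule internal_subset)+
  then have "internal P1 \<inter> set P2 \<subseteq> {v}" "internal P2 \<inter> set P1 \<subseteq> {v}" using s1(1) by auto
  with a show "internal P1 \<inter> set P2 = {}" "internal P2 \<inter> set P1 = {}" by auto
qed



lemma core_b:
  assumes th: "theta E p q A B R" and ea: "ear E A B R T" and st: "hd T = p" "last T \<in> internal A"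
  shows "good E (path_edges A \<union> path_edges B \<union> path_edges R)"
proof -
  define t where "t = last T"
  note tf = theta_facts[OF th] and ef = ear_facts[OF ea]
  have "\<exists>A1 A2. splits E A t A1 A2" using splits_ex[OF tf(2)] st(2) unfolding t_def by blast
  then obtain A1 A2 where sp: "splits E A t A1 A2" by blast
  note sf = splits_facts[OF sp]
  note ends = path_ends[OF tf(2,5)] path_ends[OF tf(3,6)] path_ends[OF tf(4,7)] path_ends[OF ef(1,2)]
    path_ends[OF sf(1,3)] path_ends[OF sf(2,4)]
  have ii: "internal A \<inter> internal B = {}" "internal A \<inter> internal R = {}" "internal B \<inter> internal R = {}"
     "internal A \<inter> internal T = {}" "internal B \<inter> internal T = {}" "internal R \<inter> internal T = {}"
    using int_disj tf(14-19) ef(6-8) by blast+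
  have tA: "t \<in> internal A" "t \<in> set A" using st(2) t_def internal_subset[of A] by auto
  have tnot: "t \<notin> internal B" "t \<notin> internal R" "t \<noteq> p" "t \<noteq> q"
    using tA ii(1,2) ends(1,2) tf(8,11) by blast+
  have qA: "q \<in> set A" using tf(11,5) by (metis last_in_set list.size(3) not_numeral_le_zero)
  have qnot: "q \<notin> internal T" "q \<notin> internal A1" "q \<notin> internal A2"
  proof -
    show "q \<notin> internal T" using qA ef(6) by blast
    show "q \<notin> internal A1" using sf(11) ends(2) tf(11) by blast
    show "q \<notin> internal A2" using ends(17) sf(8) tf(11) by simp
  qed
  have pnot: "p \<notin> internal A2" using sf(12) ends(1) tf(8) by blast
  have pw0: "internal B \<inter> internal R = {}" using ii(3) by blast
  have pw1: "path_edges B \<inter> path_edges R = {}" using tf(22) by blast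
  have pw2: "internal B \<inter> internal A1 = {}" using sf(11) ii(1) by blast
  have pw3: "path_edges B \<inter> path_edges A1 = {}" using sf(16) tf(20) by blast
  have pw4: "internal B \<inter> internal T = {}" using ii(5) by blast
  have pw5: "path_edges B \<inter> path_edges T = {}" using ef(10) by blast
  have pw6: "internal B \<inter> internal A2 = {}" using sf(12) ii(1) by blast
  have pw7: "path_edges B \<inter> path_edges A2 = {}" using sf(17) tf(20) by blast
  have pw8: "internal R \<inter> internal A1 = {}" using sf(11) ii(2) by blast
  have pw9: "path_edges R \<inter> path_edges A1 = {}" using sf(16) tf(21) by blast
  have pw10: "internal R \<inter> internal T = {}" using ii(6) by blast
  have pw11: "path_edges R \<inter> path_edges T = {}" using ef(11) by blast
  have pw12: "internal R \<inter> internal A2 = {}" using sf(12) ii(2) by blast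
  have pw13: "path_edges R \<inter> path_edges A2 = {}" using sf(17) tf(21) by blast
  have pw14: "internal A1 \<inter> internal T = {}" using sf(11) ii(4) by blast
  have pw15: "path_edges A1 \<inter> path_edges T = {}" using sf(16) ef(9) by blast
  have pw16: "internal A1 \<inter> internal A2 = {}" using sf(13) by blast
  have pw17: "path_edges A1 \<inter> path_edges A2 = {}" using sf(18) by blast
  have pw18: "internal T \<inter> internal A2 = {}" using sf(12) ii(4) by blast
  have pw19: "path_edges T \<inter> path_edges A2 = {}" using sf(17) ef(9) by blast
  have pr: "pwd [rev B, rev R, A1, T, rev A2]" using pw0 pw1 pw2 pw3 pw4 pw5 pw6 pw7 pw8 pw9 pw10 pw11 pw12 pw13 pw14 pw15 pw16 pw17 pw18 pw19 by simp
  have la: "list_all2 (\<lambda>e X. fst e < 3 \<and> snd e < 3 \<and> is_path E X \<and> length X \<ge> 2 \<and>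
               hd X = [q, p, t] ! fst e \<and> last X = [q, p, t] ! snd e \<and> internal X \<inter> set [q, p, t] = {})
            [(0,1),(0,1),(1,2),(1,2),(0,2)] [rev B, rev R, A1, T, rev A2]"
    using tf ef ends st sf tnot qnot pnot t_def by (simp add: hd_rev last_rev)
  show ?thesis
    by (rule good_intro[OF _ _ _ la pr]) (use tf tnot sf in \<open>auto simp: mg_K3_221_def\<close>)
qed



lemma core_d:
  assumes th: "theta E p q A B R" and ea: "ear E A B R T" and st: "hd T \<in> internal A" "last T \<in> internal B"
  shows "good E (path_edges A \<union> path_edges B \<union> path_edges R)"
proof -
  define s where "s = hd T"
  define t where "t = last T"
  note tf = theta_facts[OF th] and ef = ear_facts[OF ea]
  have ii: "internal A \<inter> internal B = {}" "internal A \<inter> internal R = {}" "internal B \<inter> internal R = {}"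
     "internal A \<inter> internal T = {}" "internal B \<inter> internal T = {}" "internal R \<inter> internal T = {}"
    using int_disj tf(14-19) ef(6-8) by blast+
  note ends = path_ends[OF tf(2,5)] path_ends[OF tf(3,6)] path_ends[OF tf(4,7)] path_ends[OF ef(1,2)]
  have pA: "p \<in> set A" "q \<in> set A" using tf(8,11,5)
    by (metis hd_in_set last_in_set list.size(3) not_numeral_le_zero)+
  have pT: "p \<notin> internal T" "q \<notin> internal T" using pA ef(6) by blast+

  have "\<exists>A1 A2. splits E A s A1 A2" using splits_ex[OF tf(2)] st(1) unfolding s_def by blast
  then obtain A1 A2 where spa: "splits E A s A1 A2" by blast
  have "\<exists>B1 B2. splits E B t B1 B2" using splits_ex[OF tf(3)] st(2) unfolding t_def by blast
  then obtain B1 B2 where spb: "splits E B t B1 B2" by blast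
  note sa = splits_facts[OF spa] and sb = splits_facts[OF spb]
  have sA: "s \<in> internal A" and tB: "t \<in> internal B" using st s_def t_def by auto
  have pqA: "p \<notin> internal A" "q \<notin> internal A" "p \<notin> internal B" "q \<notin> internal B"
    "p \<notin> internal R" "q \<notin> internal R"
    using ends tf(8-13) by auto
  have sn: "s \<notin> internal R" "t \<notin> internal R" "s \<notin> internal B" "t \<notin> internal A" "s \<noteq> t"
    using sA tB ii by blast+
  have dis: "distinct [p, q, s, t]" using tf(1) sA tB pqA sn by auto
  have n1: "q \<notin> internal A1" "t \<notin> internal A1" "p \<notin> internal A2" "t \<notin> internal A2"
    "q \<notin> internal B1" "s \<notin> internal B1" "p \<notin> internal B2" "s \<notin> internal B2"
    using sa(11,12) sb(11,12) pqA sn by blast+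
  have e1: "p \<notin> internal A1" "s \<notin> internal A1" "s \<notin> internal A2" "q \<notin> internal A2"
    "p \<notin> internal B1" "t \<notin> internal B1" "t \<notin> internal B2" "q \<notin> internal B2"
    "s \<notin> internal T" "t \<notin> internal T"
    using path_ends[OF sa(1,3)] path_ends[OF sa(2,4)] path_ends[OF sb(1,3)] path_ends[OF sb(2,4)] ends(10,11)
       sa(5-8) sb(5-8) tf(8-13) s_def t_def by auto
  have pw0: "internal R \<inter> internal A1 = {}" using sa(11) ii(2) by blast
  have pw1: "path_edges R \<inter> path_edges A1 = {}" using sa(16) tf(21) by blast
  have pw2: "internal R \<inter> internal B1 = {}" using sb(11) ii(3) by blast
  have pw3: "path_edges R \<inter> path_edges B1 = {}" using sb(16) tf(22) by blast
  have pw4: "internal R \<inter> internal A2 = {}" using sa(12) ii(2) by blast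
  have pw5: "path_edges R \<inter> path_edges A2 = {}" using sa(17) tf(21) by blast
  have pw6: "internal R \<inter> internal B2 = {}" using sb(12) ii(3) by blast
  have pw7: "path_edges R \<inter> path_edges B2 = {}" using sb(17) tf(22) by blast
  have pw8: "internal R \<inter> internal T = {}" using ii(6) by blast
  have pw9: "path_edges R \<inter> path_edges T = {}" using ef(11) by blast
  have pw10: "internal A1 \<inter> internal B1 = {}" using sa(11) sb(11) ii(1) by blast
  have pw11: "path_edges A1 \<inter> path_edges B1 = {}" using sa(16) sb(16) tf(20) by blast
  have pw12: "internal A1 \<inter> internal A2 = {}" using sa(13) by blast
  have pw13: "path_edges A1 \<inter> path_edges A2 = {}" using sa(18) by blast
  have pw14: "internal A1 \<inter> internal B2 = {}" using sa(11) sb(12) ii(1) by blast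
  have pw15: "path_edges A1 \<inter> path_edges B2 = {}" using sa(16) sb(17) tf(20) by blast
  have pw16: "internal A1 \<inter> internal T = {}" using sa(11) ii(4) by blast
  have pw17: "path_edges A1 \<inter> path_edges T = {}" using sa(16) ef(9) by blast
  have pw18: "internal B1 \<inter> internal A2 = {}" using sb(11) sa(12) ii(1) by blast
  have pw19: "path_edges B1 \<inter> path_edges A2 = {}" using sb(16) sa(17) tf(20) by blast
  have pw20: "internal B1 \<inter> internal B2 = {}" using sb(13) by blast
  have pw21: "path_edges B1 \<inter> path_edges B2 = {}" using sb(18) by blast
  have pw22: "internal B1 \<inter> internal T = {}" using sb(11) ii(5) by blast
  have pw23: "path_edges B1 \<inter> path_edges T = {}" using sb(16) ef(10) by blast
  have pw24: "internal A2 \<inter> internal B2 = {}" using sa(12) sb(12) ii(1) by blast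
  have pw25: "path_edges A2 \<inter> path_edges B2 = {}" using sa(17) sb(17) tf(20) by blast
  have pw26: "internal A2 \<inter> internal T = {}" using sa(12) ii(4) by blast
  have pw27: "path_edges A2 \<inter> path_edges T = {}" using sa(17) ef(9) by blast
  have pw28: "internal B2 \<inter> internal T = {}" using sb(12) ii(5) by blast
  have pw29: "path_edges B2 \<inter> path_edges T = {}" using sb(17) ef(10) by blast
  have pr: "pwd [R, A1, B1, rev A2, rev B2, T]" using pw0 pw1 pw2 pw3 pw4 pw5 pw6 pw7 pw8 pw9 pw10 pw11 pw12 pw13 pw14 pw15 pw16 pw17 pw18 pw19 pw20 pw21 pw22 pw23 pw24 pw25 pw26 pw27 pw28 pw29 by simp
  have la: "list_all2 (\<lambda>e X. fst e < 4 \<and> snd e < 4 \<and> is_path E X \<and> length X \<ge> 2 \<and>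
               hd X = [p, q, s, t] ! fst e \<and> last X = [p, q, s, t] ! snd e \<and> internal X \<inter> set [p, q, s, t] = {})
            [(0,1),(0,2),(0,3),(1,2),(1,3),(2,3)] [R, A1, B1, rev A2, rev B2, T]"
    using tf ef sa sb n1 e1 pqA sn pT s_def t_def by (simp add: hd_rev last_rev)
  show ?thesis
    by (rule good_intro[OF dis _ _ la pr]) (use sa(19) sb(19) in \<open>auto simp: mg_K4_def\<close>)
qed


lemma core_c1:
  assumes th: "theta E p q A B R" and ea: "ear E A B R T" and st: "hd T \<in> internal A"
    and spa: "splits E A (hd T) A1 A2" and tA2: "last T \<in> internal A2"
  shows "good E (path_edges A \<union> path_edges B \<union> path_edges R)"
proof -
  define s where "s = hd T"
  define t where "t = last T"
  note tf = theta_facts[OF th] and ef = ear_facts[OF ea]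
  have ii: "internal A \<inter> internal B = {}" "internal A \<inter> internal R = {}" "internal B \<inter> internal R = {}"
     "internal A \<inter> internal T = {}" "internal B \<inter> internal T = {}" "internal R \<inter> internal T = {}"
    using int_disj tf(14-19) ef(6-8) by blast+
  note ends = path_ends[OF tf(2,5)] path_ends[OF tf(3,6)] path_ends[OF tf(4,7)] path_ends[OF ef(1,2)]
  have pA: "p \<in> set A" "q \<in> set A" using tf(8,11,5)
    by (metis hd_in_set last_in_set list.size(3) not_numeral_le_zero)+
  have pT: "p \<notin> internal T" "q \<notin> internal T" using pA ef(6) by blast+

  note sa = splits_facts[OF spa[folded s_def]]
  have "\<exists>A21 A22. splits E A2 t A21 A22" using splits_ex[OF sa(2)] tA2 unfolding t_def by blast
  then obtain A21 A22 where spc: "splits E A2 t A21 A22" by blast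
  note sc = splits_facts[OF spc]
  have sA: "s \<in> internal A" and tA: "t \<in> internal A2" "t \<in> internal A" using st s_def t_def tA2 sa(12) by auto
  have pqA: "p \<notin> internal A" "q \<notin> internal A" "p \<notin> internal B" "q \<notin> internal B"
    "p \<notin> internal R" "q \<notin> internal R"
    using ends tf(8-13) by auto
  have sn: "s \<notin> internal R" "t \<notin> internal R" "s \<notin> internal B" "t \<notin> internal B" "s \<noteq> t"
    using sA tA ii ef(3) s_def t_def by blast+
  have dis: "distinct [s, t, q, p]" using tf(1) sA tA pqA sn by auto
  have n1: "q \<notin> internal A21" "p \<notin> internal A21" "s \<notin> internal A22" "p \<notin> internal A22"
     "t \<notin> internal A1" "q \<notin> internal A1"
    using sa(11,12,13,15) sc(11,12) pqA tA by blast+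
  have e1: "s \<notin> internal A21" "t \<notin> internal A21" "t \<notin> internal A22" "q \<notin> internal A22"
    "p \<notin> internal A1" "s \<notin> internal A1"
    "s \<notin> internal T" "t \<notin> internal T"
    using path_ends[OF sc(1,3)] path_ends[OF sc(2,4)] path_ends[OF sa(1,3)] ends(10,11)
       sa(5-8) sc(5-8) tf(8-13) s_def t_def by auto
  have pw0: "internal A21 \<inter> internal T = {}" using sc(11) sa(12) ii(4) by blast
  have pw1: "path_edges A21 \<inter> path_edges T = {}" using sc(16) sa(17) ef(9) by blast
  have pw2: "internal A21 \<inter> internal A22 = {}" using sc(13) by blast
  have pw3: "path_edges A21 \<inter> path_edges A22 = {}" using sc(18) by blast
  have pw4: "internal A21 \<inter> internal B = {}" using sc(11) sa(12) ii(1) by blast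
  have pw5: "path_edges A21 \<inter> path_edges B = {}" using sc(16) sa(17) tf(20) by blast
  have pw6: "internal A21 \<inter> internal R = {}" using sc(11) sa(12) ii(2) by blast
  have pw7: "path_edges A21 \<inter> path_edges R = {}" using sc(16) sa(17) tf(21) by blast
  have pw8: "internal A21 \<inter> internal A1 = {}" using sc(11) sa(13) by blast
  have pw9: "path_edges A21 \<inter> path_edges A1 = {}" using sc(16) sa(18) by blast
  have pw10: "internal T \<inter> internal A22 = {}" using sc(12) sa(12) ii(4) by blast
  have pw11: "path_edges T \<inter> path_edges A22 = {}" using sc(17) sa(17) ef(9) by blast
  have pw12: "internal T \<inter> internal B = {}" using ii(5) by blast
  have pw13: "path_edges T \<inter> path_edges B = {}" using ef(10) by blast
  have pw14: "internal T \<inter> internal R = {}" using ii(6) by blast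
  have pw15: "path_edges T \<inter> path_edges R = {}" using ef(11) by blast
  have pw16: "internal T \<inter> internal A1 = {}" using sa(11) ii(4) by blast
  have pw17: "path_edges T \<inter> path_edges A1 = {}" using sa(16) ef(9) by blast
  have pw18: "internal A22 \<inter> internal B = {}" using sc(12) sa(12) ii(1) by blast
  have pw19: "path_edges A22 \<inter> path_edges B = {}" using sc(17) sa(17) tf(20) by blast
  have pw20: "internal A22 \<inter> internal R = {}" using sc(12) sa(12) ii(2) by blast
  have pw21: "path_edges A22 \<inter> path_edges R = {}" using sc(17) sa(17) tf(21) by blast
  have pw22: "internal A22 \<inter> internal A1 = {}" using sc(12) sa(13) by blast
  have pw23: "path_edges A22 \<inter> path_edges A1 = {}" using sc(17) sa(18) by blast
  have pw24: "internal B \<inter> internal R = {}" using ii(3) by blast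
  have pw25: "path_edges B \<inter> path_edges R = {}" using tf(22) by blast
  have pw26: "internal B \<inter> internal A1 = {}" using sa(11) ii(1) by blast
  have pw27: "path_edges B \<inter> path_edges A1 = {}" using sa(16) tf(20) by blast
  have pw28: "internal R \<inter> internal A1 = {}" using sa(11) ii(2) by blast
  have pw29: "path_edges R \<inter> path_edges A1 = {}" using sa(16) tf(21) by blast
  have pr: "pwd [A21, T, A22, rev B, rev R, A1]" using pw0 pw1 pw2 pw3 pw4 pw5 pw6 pw7 pw8 pw9 pw10 pw11 pw12 pw13 pw14 pw15 pw16 pw17 pw18 pw19 pw20 pw21 pw22 pw23 pw24 pw25 pw26 pw27 pw28 pw29 by simp
  have la: "list_all2 (\<lambda>e X. fst e < 4 \<and> snd e < 4 \<and> is_path E X \<and> length X \<ge> 2 \<and>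
               hd X = [s, t, q, p] ! fst e \<and> last X = [s, t, q, p] ! snd e \<and> internal X \<inter> set [s, t, q, p] = {})
            [(0,1),(0,1),(1,2),(2,3),(2,3),(3,0)] [A21, T, A22, rev B, rev R, A1]"
    using tf ef sa sc n1 e1 pqA sn pT s_def t_def by (simp add: hd_rev last_rev)
  show ?thesis
    by (rule good_intro[OF dis _ _ la pr]) (use sa(19) sc(19) in \<open>auto simp: mg_C4_2121_def\<close>)
qed

lemma good_perm:
  "good E (X \<union> Y \<union> Z) \<Longrightarrow> good E (Y \<union> X \<union> Z)"
  "good E (X \<union> Y \<union> Z) \<Longrightarrow> good E (X \<union> Z \<union> Y)"
  by (simp_all add: Un_ac)

lemma core_c:
  assumes th: "theta E p q A B R" and ea: "ear E A B R T" and st: "hd T \<in> internal A" "last T \<in> internal A"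
  shows "good E (path_edges A \<union> path_edges B \<union> path_edges R)"
proof -
  note tf = theta_facts[OF th] and ef = ear_facts[OF ea]
  obtain A1 A2 where spa: "splits E A (hd T) A1 A2" using splits_ex[OF tf(2) st(1)] by blast
  have "internal A = internal A1 \<union> internal A2 \<union> {hd T}" using spa unfolding splits_def by blast
  then have "last T \<in> internal A1 \<or> last T \<in> internal A2" using st(2) ef(3) by auto
  then show ?thesis
  proof
    assume "last T \<in> internal A2"
    then show ?thesis using core_c1[OF th ea st(1) spa] by blast
  next
    assume a: "last T \<in> internal A1"
    have "good E (path_edges (rev A) \<union> path_edges (rev B) \<union> path_edges (rev R))"
      by (rule core_c1[OF theta_sym(3)[OF th] ear_sym(3)[OF ea] _ splits_rev[OF spa]])
         (use st a in simp_all)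
    then show ?thesis by simp
  qed
qed

lemma loc:
  assumes th: "theta E p q A B R" and v: "v \<in> set A \<union> set B \<union> set R"
  shows "v = p \<or> v = q \<or> v \<in> internal A \<or> v \<in> internal B \<or> v \<in> internal R"
proof -
  note tf = theta_facts[OF th]
  show ?thesis using v set_internal[OF tf(5)] set_internal[OF tf(6)] set_internal[OF tf(7)] tf(8-13) by auto
qed

lemma case_b:
  assumes th: "theta E p q A B R" and ea: "ear E A B R T" and st: "hd T = p"
    "last T \<in> internal A \<or> last T \<in> internal B \<or> last T \<in> internal R"
  shows "good E (path_edges A \<union> path_edges B \<union> path_edges R)"
  using st(2)
proof (elim disjE)
  assume "last T \<in> internal A" then show ?thesis using core_b[OF th ea st(1)] by blast
next
  assume "last T \<in> internal B"
  then show ?thesis using core_b[OF theta_sym(1)[OF th] ear_sym(1)[OF ea] st(1)] good_perm(1) by blast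
next
  assume "last T \<in> internal R"
  then show ?thesis using core_b[OF theta_sym(1)[OF theta_sym(2)[OF th]] ear_sym(1)[OF ear_sym(2)[OF ea]] st(1)]
    good_perm by blast
qed

lemma case_b2:
  assumes th: "theta E p q A B R" and ea: "ear E A B R T" and st: "hd T = p \<or> hd T = q"
    "last T \<in> internal A \<or> last T \<in> internal B \<or> last T \<in> internal R"
  shows "good E (path_edges A \<union> path_edges B \<union> path_edges R)"
  using st(1)
proof
  assume "hd T = p" then show ?thesis using case_b[OF th ea _ st(2)] by blast
next
  assume "hd T = q"
  then have "good E (path_edges (rev A) \<union> path_edges (rev B) \<union> path_edges (rev R))"
    using case_b[OF theta_sym(3)[OF th] ear_sym(3)[OF ea]] st(2) by simp
  then show ?thesis by simp
qed

lemma case_cd: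
  assumes th: "theta E p q A B R" and ea: "ear E A B R T"
    and s: "hd T \<in> internal A \<or> hd T \<in> internal B \<or> hd T \<in> internal R"
    and t: "last T \<in> internal A \<or> last T \<in> internal B \<or> last T \<in> internal R"
  shows "good E (path_edges A \<union> path_edges B \<union> path_edges R)"
proof -
  note th1 = theta_sym(1)[OF th] and ea1 = ear_sym(1)[OF ea]
  note th2 = theta_sym(2)[OF th] and ea2 = ear_sym(2)[OF ea]
  note th12 = theta_sym(2)[OF th1] and ea12 = ear_sym(2)[OF ea1]
  note th21 = theta_sym(1)[OF th2] and ea21 = ear_sym(1)[OF ea2]
  note th212 = theta_sym(2)[OF th21] and ea212 = ear_sym(2)[OF ea21]
  have U: "path_edges B \<union> path_edges A \<union> path_edges R = path_edges A \<union> path_edges B \<union> path_edges R"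
    "path_edges A \<union> path_edges R \<union> path_edges B = path_edges A \<union> path_edges B \<union> path_edges R"
    "path_edges B \<union> path_edges R \<union> path_edges A = path_edges A \<union> path_edges B \<union> path_edges R"
    "path_edges R \<union> path_edges A \<union> path_edges B = path_edges A \<union> path_edges B \<union> path_edges R"
    "path_edges R \<union> path_edges B \<union> path_edges A = path_edges A \<union> path_edges B \<union> path_edges R"
    by auto
  from s t show ?thesis
  proof (elim disjE)
    assume "hd T \<in> internal A" "last T \<in> internal A" then show ?thesis using core_c[OF th ea] by blast
  next
    assume "hd T \<in> internal A" "last T \<in> internal B" then show ?thesis using core_d[OF th ea] by blast
  next
    assume "hd T \<in> internal A" "last T \<in> internal R" then show ?thesis using core_d[OF th2 ea2] U by simp
  next
    assume "hd T \<in> internal B" "last T \<in> internal A" then show ?thesis using core_d[OF th1 ea1] U by simp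
  next
    assume "hd T \<in> internal B" "last T \<in> internal B" then show ?thesis using core_c[OF th1 ea1] U by simp
  next
    assume "hd T \<in> internal B" "last T \<in> internal R" then show ?thesis using core_d[OF th12 ea12] U by simp
  next
    assume "hd T \<in> internal R" "last T \<in> internal A" then show ?thesis using core_d[OF th21 ea21] U by simp
  next
    assume "hd T \<in> internal R" "last T \<in> internal B" then show ?thesis using core_d[OF th212 ea212] U by simp
  next
    assume "hd T \<in> internal R" "last T \<in> internal R" then show ?thesis using core_c[OF th21 ea21] U by simp
  qed
qed

lemma theta_ear:
  assumes th: "theta E p q A B R" and ea: "ear E A B R T"
  shows "good E (path_edges A \<union> path_edges B \<union> path_edges R)"
proof -
  note ef = ear_facts[OF ea] and tf = theta_facts[OF th]
  have s: "hd T = p \<or> hd T = q \<or> hd T \<in> internal A \<or> hd T \<in> internal B \<or> hd T \<in> internal R"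
    using loc[OF th ef(4)] .
  have t: "last T = p \<or> last T = q \<or> last T \<in> internal A \<or> last T \<in> internal B \<or> last T \<in> internal R"
    using loc[OF th ef(5)] .
  have eaR: "ear E A B R (rev T)" using ear_sym(4)[OF ea] .
  consider "hd T = p \<or> hd T = q" "last T = p \<or> last T = q"
    | "hd T = p \<or> hd T = q" "last T \<in> internal A \<or> last T \<in> internal B \<or> last T \<in> internal R"
    | "hd T \<in> internal A \<or> hd T \<in> internal B \<or> hd T \<in> internal R" "last T = p \<or> last T = q"
    | "hd T \<in> internal A \<or> hd T \<in> internal B \<or> hd T \<in> internal R"
      "last T \<in> internal A \<or> last T \<in> internal B \<or> last T \<in> internal R"
    using s t by blast
  then show ?thesis
  proof cases
    case 1
    then have "(hd T = p \<and> last T = q) \<or> (hd T = q \<and> last T = p)" using ef(3) by auto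
    then show ?thesis
    proof
      assume "hd T = p \<and> last T = q" then show ?thesis using core_a[OF th ea] by blast
    next
      assume "hd T = q \<and> last T = p"
      then show ?thesis using core_a[OF th eaR] by (simp add: hd_rev last_rev)
    qed
  next
    case 2 then show ?thesis using case_b2[OF th ea] by blast
  next
    case 3 then show ?thesis using case_b2[OF th eaR] by (simp add: hd_rev last_rev)
  next
    case 4 then show ?thesis using case_cd[OF th ea] by blast
  qed
qed

lemma sg_facts:
  assumes "simple_graph V E"
  shows "finite V" "finite E" "\<forall>v. {v, v} \<notin> E" "\<And>u v. {u, v} \<in> E \<Longrightarrow> u \<in> V \<and> v \<in> V \<and> u \<noteq> v"
proof -
  show fV: "finite V" using assms unfolding simple_graph_def by blast
  have "E \<subseteq> Pow V"
  proof
    fix e assume "e \<in> E"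
    then obtain u v where "e = {u, v}" "u \<in> V" "v \<in> V" using assms unfolding simple_graph_def by blast
    then show "e \<in> Pow V" by simp
  qed
  then show "finite E" by (rule finite_subset) (simp add: fV)
  show "\<forall>v. {v, v} \<notin> E" using assms unfolding simple_graph_def by (auto simp: doubleton_eq_iff)
  fix u v assume "{u, v} \<in> E"
  then obtain a b where "{u, v} = {a, b}" "a \<noteq> b" "a \<in> V" "b \<in> V" using assms unfolding simple_graph_def by blast
  then show "u \<in> V \<and> v \<in> V \<and> u \<noteq> v" by (auto simp: doubleton_eq_iff)
qed

lemma col_mono_E: "E' \<subseteq> E \<Longrightarrow> colourable V E k \<Longrightarrow> colourable V E' k"
  unfolding colourable_def proper_colouring_def by blast

lemma col_mono_k: "colourable V E k \<Longrightarrow> k \<le> k' \<Longrightarrow> colourable V E k'"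
  unfolding colourable_def proper_colouring_def by (meson less_le_trans)

lemma col_exists:
  assumes "simple_graph V E" "E' \<subseteq> E" shows "colourable V E' (card V)"
proof -
  obtain h where h: "bij_betw h V {0..<card V}" using ex_bij_betw_finite_nat sg_facts(1)[OF assms(1)] by blast
  have "proper_colouring V E' h (card V)" unfolding proper_colouring_def
  proof (intro conjI allI impI ballI)
    fix v assume "v \<in> V" then show "h v < card V" using h by (auto simp: bij_betw_def)
  next
    fix u v assume "{u, v} \<in> E'"
    then have "u \<in> V \<and> v \<in> V \<and> u \<noteq> v" using sg_facts(4)[OF assms(1)] assms(2) by blast
    then show "h u \<noteq> h v" using h by (auto simp: bij_betw_def inj_on_def)
  qed
  then show ?thesis unfolding colourable_def by blast
qed

lemma chi_col: "simple_graph V E \<Longrightarrow> E' \<subseteq> E \<Longrightarrow> colourable V E' (chromatic_number V E')"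
  unfolding chromatic_number_def by (rule LeastI_ex) (blast intro: col_exists)

lemma chi_le: "colourable V E' k \<Longrightarrow> chromatic_number V E' \<le> k"
  unfolding chromatic_number_def by (rule Least_le)

lemma col1_noedge:
  assumes "simple_graph V E" "E' \<subseteq> E" "colourable V E' 1" shows "E' = {}"
proof (rule ccontr)
  assume "E' \<noteq> {}"
  then obtain e where e: "e \<in> E'" by blast
  then obtain u v where uv: "e = {u, v}" "u \<in> V" "v \<in> V" "u \<noteq> v"
    using assms(1,2) unfolding simple_graph_def by blast
  obtain c where c: "proper_colouring V E' c 1" using assms(3) unfolding colourable_def by blast
  then have "c u < 1" "c v < 1" "c u \<noteq> c v" using uv e unfolding proper_colouring_def by blast+
  then show False by simp
qed

lemma is_cycle_mono: "is_cycle E' xs \<Longrightarrow> E' \<subseteq> E \<Longrightarrow> is_cycle E xs"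
  unfolding is_cycle_def by blast

lemma is_cycle_sub: "is_cycle E xs \<Longrightarrow> cycle_edges xs \<subseteq> E' \<Longrightarrow> is_cycle E' xs"
  unfolding is_cycle_def cycle_edges_def by blast

lemma col2_no_odd:
  assumes "simple_graph V E" "E' \<subseteq> E" "colourable V E' 2" "is_cycle E' xs" "odd (length xs)"
  shows False
proof -
  obtain c where c: "proper_colouring V E' c 2" using assms(3) unfolding colourable_def by blast
  define c' where "c' v = (c v = 0)" for v
  have "proper c' (cycle_edges xs)" unfolding proper_def
  proof (intro allI impI)
    fix u v assume "{u, v} \<in> cycle_edges xs"
    then have uv: "{u, v} \<in> E'" using cycle_edges_in[OF assms(4)] by blast
    then have "u \<in> V" "v \<in> V" using sg_facts(4)[OF assms(1)] assms(2) by blast+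
    then have "c u < 2" "c v < 2" "c u \<noteq> c v" using c uv unfolding proper_colouring_def by blast+
    then show "c' u \<noteq> c' v" unfolding c'_def by auto
  qed
  then show False using odd_cycle_no_colour[OF assms(4,5)] by blast
qed

lemma nocyc_col2:
  assumes "simple_graph V E" "E' \<subseteq> E" "\<not> (\<exists>xs. is_cycle E' xs \<and> odd (length xs))"
  shows "colourable V E' 2"
proof -
  have "\<forall>v. {v, v} \<notin> E'" using sg_facts(3)[OF assms(1)] assms(2) by blast
  then obtain c where c: "proper c E'" using bipartite assms(3) by blast
  have "proper_colouring V E' (\<lambda>v. if c v then 1 else 0) 2"
    using c unfolding proper_colouring_def proper_def by auto
  then show ?thesis unfolding colourable_def by blast
qed

lemma cyc_two_edges:
  assumes "is_cycle E xs" shows "{xs ! 0, xs ! 1} \<in> cycle_edges xs" "{xs ! 1, xs ! 2} \<in> cycle_edges xs"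
    "{xs ! 0, xs ! 1} \<noteq> {xs ! 1, xs ! 2}"
proof -
  have l: "length xs \<ge> 3" "distinct xs" using assms by (auto simp: is_cycle_def)
  have m0: "Suc 0 mod length xs = 1" using l(1) by (simp add: mod_if)
  have "0 < length xs" using l(1) by linarith
  then have "{xs ! 0, xs ! 1} = {xs ! 0, xs ! (Suc 0 mod length xs)} \<and> 0 < length xs" using m0 by simp
  then show "{xs ! 0, xs ! 1} \<in> cycle_edges xs" unfolding cycle_edges_def by blast
  have m: "Suc 1 mod length xs = 2" using l(1) by simp
  have "{xs ! 1, xs ! 2} = {xs ! 1, xs ! (Suc 1 mod length xs)} \<and> 1 < length xs" using m l(1)
    by (simp add: numeral_2_eq_2)
  then show "{xs ! 1, xs ! 2} \<in> cycle_edges xs" unfolding cycle_edges_def by blast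
  have "2 < length xs" "1 < length xs" "0 < length xs" using l(1) by linarith+
  then have "xs ! 0 \<noteq> xs ! 2" "xs ! 0 \<noteq> xs ! 1" using l(2) by (simp_all add: nth_eq_iff_index_eq)
  then show "{xs ! 0, xs ! 1} \<noteq> {xs ! 1, xs ! 2}" by (auto simp: doubleton_eq_iff)
qed

lemma criticality:
  assumes sg: "simple_graph V E" and cr: "critical_3_2 V E"
    and ex: "\<exists>xs. is_cycle E xs \<and> odd (length xs)"
  shows "\<forall>e\<in>E. \<exists>f. \<forall>xs. is_cycle E xs \<and> odd (length xs) \<longrightarrow> e \<in> cycle_edges xs \<or> f \<in> cycle_edges xs"
    and "\<forall>a\<in>E. \<exists>xs. is_cycle E xs \<and> odd (length xs) \<and> a \<notin> cycle_edges xs"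
proof -
  have chi3: "chromatic_number V E = 3" and es2: "es_chi V E = 2"
    and esc: "\<forall>e\<in>E. es_chi V (E - {e}) < es_chi V E"
    using cr unfolding critical_3_2_def edge_stability_critical_def by auto
  obtain x0 where x0: "is_cycle E x0" "odd (length x0)" using ex by blast
  have twoE: "\<exists>g\<in>E. g \<noteq> e" for e
    using cyc_two_edges[OF x0(1)] cycle_edges_in[OF x0(1)] by (metis subsetD)
  have chi_minus: "chromatic_number V (E - {e}) = 3" if e: "e \<in> E" for e
  proof -
    have c3: "colourable V E 3" using chi_col[OF sg, of E] chi3 by simp
    have le3: "chromatic_number V (E - {e}) \<le> 3"
      by (rule chi_le, rule col_mono_E[OF _ c3]) blast
    have n2: "chromatic_number V (E - {e}) \<noteq> 2"
    proof
      assume a: "chromatic_number V (E - {e}) = 2"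
      have "es_chi V E \<le> 1" unfolding es_chi_def
        by (rule Least_le, rule exI[of _ "{e}"]) (use e a chi3 in auto)
      then show False using es2 by simp
    qed
    have ge2: "\<not> chromatic_number V (E - {e}) \<le> 1"
    proof
      assume a: "chromatic_number V (E - {e}) \<le> 1"
      have "colourable V (E - {e}) 1"
        by (rule col_mono_k[OF chi_col[OF sg] a]) blast
      then have "E - {e} = {}" using col1_noedge[OF sg] by blast
      then show False using twoE[of e] by blast
    qed
    show ?thesis using le3 n2 ge2 by linarith
  qed
  show "\<forall>a\<in>E. \<exists>xs. is_cycle E xs \<and> odd (length xs) \<and> a \<notin> cycle_edges xs"
  proof
    fix a assume a: "a \<in> E"
    have "\<not> colourable V (E - {a}) 2"
      using chi_le[of V "E - {a}" 2] chi_minus[OF a] by auto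
    then obtain xs where xs: "is_cycle (E - {a}) xs" "odd (length xs)"
      using nocyc_col2[OF sg, of "E - {a}"] by blast
    then show "\<exists>xs. is_cycle E xs \<and> odd (length xs) \<and> a \<notin> cycle_edges xs"
      using is_cycle_mono[OF xs(1)] cycle_edges_in[OF xs(1)] by blast
  qed
  show "\<forall>e\<in>E. \<exists>f. \<forall>xs. is_cycle E xs \<and> odd (length xs) \<longrightarrow> e \<in> cycle_edges xs \<or> f \<in> cycle_edges xs"
  proof
    fix e assume e: "e \<in> E"
    define E' where "E' = E - {e}"
    define P where "P k = (\<exists>F. F \<subseteq> E' \<and> card F = k \<and> chromatic_number V (E' - F) = chromatic_number V E' - 1)" for k
    have chiE': "chromatic_number V E' = 3" using chi_minus[OF e] E'_def by simp
    obtain g where g: "g \<in> E" "g \<noteq> e" using twoE by blast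
    have gE': "g \<in> E'" using g E'_def by simp
    have PEx: "\<exists>k. P k"
    proof -
      define F where "F = E' - {g}"
      have EF: "E' - F = {g}" using gE' F_def by auto
      obtain u v where uv: "g = {u, v}" "u \<in> V" "v \<in> V" "u \<noteq> v"
        using g(1) sg unfolding simple_graph_def by blast
      have c2: "colourable V {g} 2" unfolding colourable_def proper_colouring_def
        by (rule exI[of _ "\<lambda>w. if w = u then 1 else 0"]) (use uv in \<open>auto simp: doubleton_eq_iff\<close>)
      have n1: "\<not> chromatic_number V {g} \<le> 1"
      proof
        assume a: "chromatic_number V {g} \<le> 1"
        have "colourable V {g} 1" by (rule col_mono_k[OF chi_col[OF sg] a]) (use g in blast)
        then show False using col1_noedge[OF sg, of "{g}"] g by blast
      qed
      have "chromatic_number V {g} = 2" using chi_le[OF c2] n1 by linarith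
      then have "P (card F)" unfolding P_def using EF chiE' F_def by (intro exI[of _ F]) auto
      then show ?thesis by blast
    qed
    have "P (es_chi V E')" unfolding es_chi_def P_def[symmetric] using PEx by (rule LeastI_ex)
    then obtain F where F: "F \<subseteq> E'" "card F = es_chi V E'" "chromatic_number V (E' - F) = 2"
      unfolding P_def using chiE' by auto
    have cF: "card F \<le> 1" using F(2) esc e es2 E'_def by fastforce
    have fF: "finite F" using F(1) sg_facts(2)[OF sg] E'_def by (meson finite_Diff finite_subset)
    obtain f where fF': "F \<subseteq> {f}"
    proof (cases "F = {}")
      case True then show ?thesis using that by blast
    next
      case False
      then obtain f where "f \<in> F" by blast
      have "\<forall>a1\<in>F. \<forall>a2\<in>F. a1 = a2" using card_le_Suc0_iff_eq[OF fF] cF by simp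
      then have "F \<subseteq> {f}" using \<open>f \<in> F\<close> by blast
      then show ?thesis using that by blast
    qed
    have col: "colourable V (E' - F) 2" using chi_col[OF sg, of "E' - F"] F(3) E'_def by auto
    have "e \<in> cycle_edges xs \<or> f \<in> cycle_edges xs" if xs: "is_cycle E xs" "odd (length xs)" for xs
    proof (rule ccontr)
      assume "\<not> (e \<in> cycle_edges xs \<or> f \<in> cycle_edges xs)"
      then have "cycle_edges xs \<subseteq> E' - F" using cycle_edges_in[OF xs(1)] fF' E'_def by auto
      then have "is_cycle (E' - F) xs" by (rule is_cycle_sub[OF xs(1)])
      then show False using col2_no_odd[OF sg _ col _ xs(2)] E'_def by blast
    qed
    then show "\<exists>f. \<forall>xs. is_cycle E xs \<and> odd (length xs) \<longrightarrow> e \<in> cycle_edges xs \<or> f \<in> cycle_edges xs"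
      by blast
  qed
qed

lemma proper_mono: "F' \<subseteq> F \<Longrightarrow> proper c F \<Longrightarrow> proper c F'"
  unfolding proper_def by blast

lemma proper_on: "(\<forall>v\<in>set X. c v = c' v) \<Longrightarrow> proper c' (path_edges X) \<Longrightarrow> proper c (path_edges X)"
  unfolding proper_def by (metis pe_mem)

lemma proper_Un: "proper c F \<Longrightarrow> proper c G \<Longrightarrow> proper c (F \<union> G)"
  unfolding proper_def by blast

lemma pe_first: "length X \<ge> 2 \<Longrightarrow> {X ! 0, X ! 1} \<in> path_edges X"
  unfolding path_edges_def by (intro CollectI exI[of _ 0]) simp

lemma pe_len2: "length X = 2 \<Longrightarrow> path_edges X = {{hd X, last X}}"
proof -
  assume "length X = 2"
  then obtain x y where "X = [x, y]"
    by (metis (no_types) One_nat_def Suc_length_conv length_0_conv numeral_2_eq_2)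
  then show ?thesis by simp
qed

lemma cycle_edge_mem:
  assumes "is_cycle E xs" "e \<in> cycle_edges xs"
  shows "\<exists>u v. e = {u, v} \<and> u \<noteq> v \<and> u \<in> set xs \<and> v \<in> set xs"
proof -
  obtain i where i: "i < length xs" "e = {xs ! i, xs ! (Suc i mod length xs)}"
    using assms(2) unfolding cycle_edges_def by blast
  have l: "length xs \<ge> 3" "distinct xs" using assms(1) by (auto simp: is_cycle_def)
  have "0 < length xs" using i(1) by linarith
  then have m: "Suc i mod length xs < length xs" by simp
  have "i \<noteq> Suc i mod length xs"
  proof (cases "Suc i < length xs")
    case True then show ?thesis by simp
  next
    case False then have "Suc i = length xs" using i by simp
    then show ?thesis using l by simp
  qed
  then have "xs ! i \<noteq> xs ! (Suc i mod length xs)" using l(2) i(1) m by (simp add: nth_eq_iff_index_eq)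
  then show ?thesis using i m by (intro exI[of _ "xs ! i"] exI[of _ "xs ! (Suc i mod length xs)"]) auto
qed

lemma theta_colour:
  assumes th: "theta E p q A B R" and ev: "even (length B + length R)" and a: "a \<in> path_edges A"
  shows "\<exists>c. proper c ((path_edges A - {a}) \<union> path_edges B \<union> path_edges R)"
proof -
  note tf = theta_facts[OF th]
  obtain i where i: "Suc i < length A" "a = {A ! i, A ! Suc i}" using a unfolding path_edges_def by blast
  define A1 where "A1 = take (Suc i) A"
  define A2 where "A2 = drop (Suc i) A"
  have dA: "distinct A" using tf(2) by (simp add: is_path_def)
  have AA: "A = A1 @ A2" unfolding A1_def A2_def by simp
  have ne: "A1 \<noteq> []" "A2 \<noteq> []" unfolding A1_def A2_def using i by auto
  have lA1: "last A1 = A ! i" unfolding A1_def using i by (simp add: take_Suc_conv_app_nth)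
  have hA2: "hd A2 = A ! Suc i" unfolding A2_def using i by (simp add: hd_drop_conv_nth)
  define Z where "Z = A ! i # A2"
  have AZ: "A = A1 @ tl Z" unfolding Z_def using AA by simp
  have jz: "last A1 = hd Z" "Z \<noteq> []" unfolding Z_def using lA1 by auto
  have peZ: "path_edges Z = insert a (path_edges A2)"
    unfolding Z_def i(2) using ne(2) hA2 by (cases A2) auto
  have peA: "path_edges A = path_edges A1 \<union> path_edges A2 \<union> {a}"
    using pe_join[OF ne(1) jz(2) jz(1)] AZ peZ by auto
  have d12: "distinct A1" "distinct A2" "set A1 \<inter> set A2 = {}" using dA AA by (metis distinct_append)+
  have pA1: "p \<in> set A1" using tf(8) ne(1) AA by (metis hd_append2 hd_in_set)
  have qA2: "q \<in> set A2" using tf(11) ne(2) AA by (metis last_append last_in_set)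
  have sA: "set A1 \<subseteq> set A" "set A2 \<subseteq> set A" using AA by auto
  have setB: "set B = insert p (insert q (internal B))" using set_internal[OF tf(6)] tf(9,12) by simp
  have setA: "set A = insert p (insert q (internal A))" using set_internal[OF tf(5)] tf(8,11) by simp
  have BR: "v \<in> set B \<Longrightarrow> v \<in> set R \<Longrightarrow> v = p \<or> v = q" for v using setB tf(17) by blast
  have AB: "v \<in> set A \<Longrightarrow> v \<in> set B \<union> set R \<Longrightarrow> v = p \<or> v = q" for v using setA tf(14,15) by blast
  obtain cB where cB: "cB (hd B) = True" "cB (last B) = (True = odd (length B))" "proper cB (path_edges B)"
    using path_colour[of B True] tf(3) by (auto simp: is_path_def)
  obtain cR where cR: "cR (hd R) = True" "cR (last R) = (True = odd (length R))" "proper cR (path_edges R)"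
    using path_colour[of R True] tf(4) by (auto simp: is_path_def)
  obtain cA1 where cA1: "cA1 (hd A1) = True" "proper cA1 (path_edges A1)"
    using path_colour[of A1 True] d12 ne by auto
  obtain cA2 where cA2: "cA2 (last A2) = ((cB q = odd (length A2)) = odd (length A2))" "proper cA2 (path_edges A2)"
    using path_colour[of A2 "cB q = odd (length A2)"] d12 ne by auto
  have hA1: "hd A1 = p" using tf(8) ne(1) AA by (metis hd_append2)
  have lA2: "last A2 = q" using tf(11) ne(2) AA by (metis last_append)
  have cq: "cB q = cR q" using cB(2) cR(2) tf(12,13) ev by auto
  have cp: "cB p = cR p" "cA1 p = cB p" using cB(1) cR(1) cA1(1) tf(9,10) hA1 by auto
  have cq2: "cA2 q = cB q" using cA2(1) lA2 by auto
  define c where "c v = (if v \<in> set B then cB v else if v \<in> set R then cR v else if v \<in> set A1 then cA1 v else cA2 v)" for v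
  have qnA1: "q \<notin> set A1" using qA2 d12(3) by blast
  have pnA2: "p \<notin> set A2" using pA1 d12(3) by blast
  have oB: "\<forall>v\<in>set B. c v = cB v" unfolding c_def by simp
  have oR: "\<forall>v\<in>set R. c v = cR v" unfolding c_def using BR cp cq by auto
  have oA1: "\<forall>v\<in>set A1. c v = cA1 v"
  proof
    fix v assume v: "v \<in> set A1"
    show "c v = cA1 v"
    proof (cases "v \<in> set B \<union> set R")
      case True
      then have "v = p" using AB[of v] v sA qnA1 by blast
      then show ?thesis unfolding c_def using cp v by auto
    next
      case False then show ?thesis unfolding c_def using v by auto
    qed
  qed
  have oA2: "\<forall>v\<in>set A2. c v = cA2 v"
  proof
    fix v assume v: "v \<in> set A2"
    show "c v = cA2 v"
    proof (cases "v \<in> set B \<union> set R")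
      case True
      then have "v = q" using AB[of v] v sA pnA2 by blast
      moreover have "q \<in> set B" using tf(12,6) by (metis last_in_set list.size(3) not_numeral_le_zero)
      ultimately show ?thesis unfolding c_def using cq cq2 v by auto
    next
      case False then show ?thesis unfolding c_def using v d12(3) by auto
    qed
  qed
  have "proper c (path_edges B)" "proper c (path_edges R)" "proper c (path_edges A1)" "proper c (path_edges A2)"
    using proper_on[OF oB cB(3)] proper_on[OF oR cR(3)] proper_on[OF oA1 cA1(2)] proper_on[OF oA2 cA2(2)] .
  then have "proper c (path_edges A1 \<union> path_edges A2 \<union> path_edges B \<union> path_edges R)"
    by (intro proper_Un)
  moreover have "(path_edges A - {a}) \<union> path_edges B \<union> path_edges R \<subseteq> path_edges A1 \<union> path_edges A2 \<union> path_edges B \<union> path_edges R"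
    using peA by blast
  ultimately show ?thesis using proper_mono by blast
qed

definition crit1 :: "'a set set \<Rightarrow> bool" where
  "crit1 E \<longleftrightarrow> (\<forall>e\<in>E. \<exists>f. \<forall>xs. is_cycle E xs \<and> odd (length xs) \<longrightarrow> e \<in> cycle_edges xs \<or> f \<in> cycle_edges xs)"

definition crit2 :: "'a set set \<Rightarrow> bool" where
  "crit2 E \<longleftrightarrow> (\<forall>a\<in>E. \<exists>xs. is_cycle E xs \<and> odd (length xs) \<and> a \<notin> cycle_edges xs)"

lemma pe_sub_set: "e \<in> path_edges X \<Longrightarrow> e \<subseteq> set X"
  using pe_mem' by blast

lemma second_ear:
  assumes c1: "crit1 E" and c2: "crit2 E" and th: "theta E p q A B R"
    and zs: "is_cycle E zs" "odd (length zs)" "cycle_edges zs = path_edges A \<union> path_edges R"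
    and ev: "even (length B + length R)"
  shows "\<exists>T. ear E A B R T"
proof -
  note tf = theta_facts[OF th]
  define a where "a = {A ! 0, A ! 1}"
  have aA: "a \<in> path_edges A" unfolding a_def by (rule pe_first[OF tf(5)])
  have aE: "a \<in> E" using aA pe_walk tf(2) by (auto simp: is_path_walk)
  obtain D where D: "is_cycle E D" "odd (length D)" "a \<notin> cycle_edges D"
    using c2 aE unfolding crit2_def by blast
  define F where "F = path_edges A \<union> path_edges B \<union> path_edges R"
  define S where "S = set A \<union> set B \<union> set R"
  have nsub: "\<not> cycle_edges D \<subseteq> F"
  proof
    assume "cycle_edges D \<subseteq> F"
    then have sub: "cycle_edges D \<subseteq> (path_edges A - {a}) \<union> path_edges B \<union> path_edges R"
      using D(3) unfolding F_def by blast
    obtain c where "proper c ((path_edges A - {a}) \<union> path_edges B \<union> path_edges R)"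
      using theta_colour[OF th ev aA] by blast
    then have "proper c (cycle_edges D)" using proper_mono[OF sub] by blast
    then show False using odd_cycle_no_colour[OF D(1,2)] by blast
  qed
  then obtain g where g: "g \<in> cycle_edges D" "g \<notin> F" by blast
  have FS: "\<forall>e\<in>F. e \<subseteq> S" unfolding F_def S_def using pe_sub_set by blast
  show ?thesis
  proof (cases "\<exists>u v. u \<noteq> v \<and> u \<in> S \<and> v \<in> S \<and> u \<in> set D \<and> v \<in> set D")
    case True
    then obtain u v where uv: "u \<in> S" "v \<in> S" "u \<in> set D" "v \<in> set D" "u \<noteq> v" by blast
    obtain T where T: "is_path E T" "length T \<ge> 2" "hd T \<in> S" "last T \<in> S" "hd T \<noteq> last T"
        "internal T \<inter> S = {}" "path_edges T \<inter> F = {}"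
      using ear[OF D(1) FS g uv] by blast
    have "ear E A B R T" unfolding ear_def using T unfolding S_def F_def by blast
    then show ?thesis by blast
  next
    case False
    have disj: "cycle_edges D \<inter> F = {}"
    proof (rule ccontr)
      assume "cycle_edges D \<inter> F \<noteq> {}"
      then obtain e where e: "e \<in> cycle_edges D" "e \<in> F" by blast
      obtain u v where "e = {u, v}" "u \<noteq> v" "u \<in> set D" "v \<in> set D" using cycle_edge_mem[OF D(1) e(1)] by blast
      moreover have "e \<subseteq> S" using FS e(2) by blast
      ultimately show False using False by blast
    qed
    define b where "b = {B ! 0, B ! 1}"
    have bB: "b \<in> path_edges B" unfolding b_def by (rule pe_first[OF tf(6)])
    have bE: "b \<in> E" using bB pe_walk tf(3) by (auto simp: is_path_walk)
    obtain f where f: "\<And>xs. is_cycle E xs \<Longrightarrow> odd (length xs) \<Longrightarrow> b \<in> cycle_edges xs \<or> f \<in> cycle_edges xs"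
      using c1 bE unfolding crit1_def by blast
    have "b \<notin> cycle_edges zs" using zs(3) bB tf(20,22) by blast
    then have fz: "f \<in> F" using f[OF zs(1,2)] zs(3) unfolding F_def by blast
    have "b \<notin> cycle_edges D" using disj bB unfolding F_def by blast
    then have "f \<in> cycle_edges D" using f[OF D(1,2)] by blast
    then show ?thesis using disj fz by blast
  qed
qed

lemma finish:
  assumes sg: "simple_graph V E" and c1: "crit1 E" and c2: "crit2 E" and th: "theta E p q A B R"
    and xs: "is_cycle E xs" "odd (length xs)" "cycle_edges xs = path_edges A \<union> path_edges B"
    and zs: "is_cycle E zs" "odd (length zs)" "cycle_edges zs = path_edges A \<union> path_edges R"
    and ev: "even (length B + length R)"
  shows "\<exists>H \<in> {mg_K2_4, mg_K4, mg_K3_221, mg_C4_2121}. \<exists>f P.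
           is_subdivision E H f P \<and>
           card {C \<in> odd_cycles E. C \<subseteq> subdivision_edges H P} \<ge> 2"
proof -
  note tf = theta_facts[OF th]
  obtain T where T: "ear E A B R T" using second_ear[OF c1 c2 th zs ev] by blast
  have "good E (path_edges A \<union> path_edges B \<union> path_edges R)" by (rule theta_ear[OF th T])
  then obtain H f P where H: "H \<in> {mg_K2_4, mg_K4, mg_K3_221, mg_C4_2121}" "is_subdivision E H f P"
    "path_edges A \<union> path_edges B \<union> path_edges R \<subseteq> subdivision_edges H P" unfolding good_def by blast
  define S where "S = {C \<in> odd_cycles E. C \<subseteq> subdivision_edges H P}"
  have C1: "cycle_edges xs \<in> S" unfolding S_def odd_cycles_def using xs H(3) by blast
  have C2: "cycle_edges zs \<in> S" unfolding S_def odd_cycles_def using zs H(3) by blast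
  have r: "{R ! 0, R ! 1} \<in> path_edges R" by (rule pe_first[OF tf(7)])
  have ne: "cycle_edges xs \<noteq> cycle_edges zs" using r tf(21,22) xs(3) zs(3) by blast
  have fin: "finite S"
  proof (rule finite_subset)
    show "S \<subseteq> Pow E" unfolding S_def odd_cycles_def using cycle_edges_in by blast
    show "finite (Pow E)" using sg_facts(2)[OF sg] by simp
  qed
  have "card {cycle_edges xs, cycle_edges zs} \<le> card S"
    by (rule card_mono[OF fin]) (use C1 C2 in blast)
  then have "card S \<ge> 2" using ne by simp
  then show ?thesis using H(1,2) unfolding S_def by blast
qed

lemma from_pair:
  assumes sg: "simple_graph V E" and c1: "crit1 E" and c2: "crit2 E"
    and xs: "is_cycle E xs" "odd (length xs)" and ys: "is_cycle E ys"
    and g: "g \<in> cycle_edges ys" "g \<notin> cycle_edges xs"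
    and uv: "u \<noteq> v" "u \<in> set xs" "v \<in> set xs" "u \<in> set ys" "v \<in> set ys"
  shows "\<exists>H \<in> {mg_K2_4, mg_K4, mg_K3_221, mg_C4_2121}. \<exists>f P.
           is_subdivision E H f P \<and>
           card {C \<in> odd_cycles E. C \<subseteq> subdivision_edges H P} \<ge> 2"
proof -
  have FS: "\<forall>e\<in>cycle_edges xs. e \<subseteq> set xs" using cycle_edge_mem[OF xs(1)] by blast
  obtain R where R: "is_path E R" "length R \<ge> 2" "hd R \<in> set xs" "last R \<in> set xs" "hd R \<noteq> last R"
      "internal R \<inter> set xs = {}" "path_edges R \<inter> cycle_edges xs = {}"
    using ear[OF ys FS g uv(2,3,4,5,1)] by blast
  define p where "p = hd R"
  define q where "q = last R"
  have pq: "p \<in> set xs" "q \<in> set xs" "p \<noteq> q" using R p_def q_def by auto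
  obtain A B where AB: "is_path E A" "is_path E B" "hd A = p" "last A = q" "hd B = p" "last B = q"
     "length A \<ge> 2" "length B \<ge> 2"
     "set A \<inter> set B = {p, q}" "set A \<union> set B = set xs"
     "path_edges A \<union> path_edges B = cycle_edges xs" "length A + length B = length xs + 2"
    using cycle_split[OF xs(1) pq] by blast
  have lx: "length xs \<ge> 3" using xs(1) by (simp add: is_cycle_def)
  have dA: "distinct A" "distinct B" using AB(1,2) by (auto simp: is_path_def)
  have setR: "set R = insert p (insert q (internal R))" using set_internal[OF R(2)] p_def q_def by simp
  have AR: "set A \<inter> set R \<subseteq> {p, q}" "set B \<inter> set R \<subseteq> {p, q}" using setR R(6) AB(10) by blast+
  have iAB: "internal A \<inter> set B = {}" "internal B \<inter> set A = {}"
    using internal_disj[OF dA(1) AB(7)] internal_disj[OF dA(2) AB(8)] AB(3-6,9) by (simp_all add: Int_commute)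
  have iAR: "internal A \<inter> set R = {}" "internal B \<inter> set R = {}"
    using internal_disj[OF dA(1) AB(7)] internal_disj[OF dA(2) AB(8)] AB(3-6) AR by auto
  have iRA: "internal R \<inter> set A = {}" "internal R \<inter> set B = {}" using R(6) AB(10) by blast+
  have peAB: "path_edges A \<inter> path_edges B = {}"
  proof (rule ccontr)
    assume "path_edges A \<inter> path_edges B \<noteq> {}"
    then obtain e where "e \<in> path_edges A" "e \<in> path_edges B" by blast
    then have "length A = 2 \<and> length B = 2" using edj[OF AB(1,7) AB(2,8) iAB] by blast
    then show False using AB(12) lx by simp
  qed
  have peR: "path_edges A \<inter> path_edges R = {}" "path_edges B \<inter> path_edges R = {}" using R(7) AB(11) by blast+
  have th: "theta E p q A B R" unfolding theta_def tp_def dj_def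
    using pq AB R iAB iAR iRA peAB peR p_def q_def by (auto simp: Int_commute)
  have cyc: "\<exists>zs. is_cycle E zs \<and> cycle_edges zs = path_edges X \<union> path_edges R \<and> length zs + 2 = length X + length R"
    if X: "is_path E X" "hd X = p" "last X = q" "length X \<ge> 2" "set X \<inter> set R \<subseteq> {p, q}"
       "path_edges X \<inter> path_edges R = {}" for X
  proof (rule paths_cycle)
    show "is_path E X" "is_path E R" by (fact X(1)) (fact R(1))
    show "hd X = hd R" "last X = last R" "hd X \<noteq> last X" using X p_def q_def pq by auto
    have "p \<in> set X" "q \<in> set X" using X(2,3,4) by (metis hd_in_set last_in_set list.size(3) not_numeral_le_zero)+
    moreover have "p \<in> set R" "q \<in> set R" using setR by auto
    ultimately show "set X \<inter> set R = {hd X, last X}" using X(2,3,5) by auto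
    show "length X + length R \<ge> 5"
    proof (rule ccontr)
      assume "\<not> length X + length R \<ge> 5"
      then have "length X = 2" "length R = 2" using X(4) R(2) by auto
      then have "path_edges X = {{p, q}}" "path_edges R = {{p, q}}" using pe_len2 X p_def q_def by metis+
      then show False using X(6) by simp
    qed
  qed
  obtain zA where zA: "is_cycle E zA" "cycle_edges zA = path_edges A \<union> path_edges R" "length zA + 2 = length A + length R"
    using cyc[OF AB(1,3,4,7) AR(1) peR(1)] by blast
  obtain zB where zB: "is_cycle E zB" "cycle_edges zB = path_edges B \<union> path_edges R" "length zB + 2 = length B + length R"
    using cyc[OF AB(2,5,6,8) AR(2) peR(2)] by blast
  have xsAB: "cycle_edges xs = path_edges A \<union> path_edges B" using AB(11) by simp
  show ?thesis
  proof (cases "odd (length zA)")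
    case True
    have "even (length B + length R)" using True xs(2) zA(3) AB(12) by presburger
    then show ?thesis using finish[OF sg c1 c2 th xs(1,2) xsAB zA(1) True zA(2)] by blast
  next
    case False
    have oB: "odd (length zB)" using False xs(2) zA(3) zB(3) AB(12) by presburger
    have ev: "even (length A + length R)" using False zA(3) by presburger
    have "cycle_edges xs = path_edges B \<union> path_edges A" using xsAB by blast
    then show ?thesis using finish[OF sg c1 c2 theta_sym(1)[OF th] xs(1,2) _ zB(1) oB zB(2) ev] by blast
  qed
qed

lemma three_elems:
  assumes "card S \<ge> 3" shows "\<exists>a b c. a \<in> S \<and> b \<in> S \<and> c \<in> S \<and> a \<noteq> b \<and> a \<noteq> c \<and> b \<noteq> c"
proof -
  have fin: "finite S" using assms by (metis card.infinite not_numeral_le_zero)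
  obtain a where a: "a \<in> S" using assms by fastforce
  have "card (S - {a}) \<ge> 2" using a fin assms by (simp add: card_Diff_singleton)
  then have "S - {a} \<noteq> {}" by (metis card.empty not_numeral_le_zero)
  then obtain b where b: "b \<in> S - {a}" by blast
  have "card (S - {a} - {b}) \<ge> 1" using b fin \<open>card (S - {a}) \<ge> 2\<close> by (simp add: card_Diff_singleton)
  then have "S - {a} - {b} \<noteq> {}" by (metis card.empty not_one_le_zero)
  then obtain c where c: "c \<in> S - {a} - {b}" by blast
  show ?thesis using a b c by blast
qed

theorem proposition2p7:
  fixes V :: "'a set" and E :: "'a set set"
  assumes "simple_graph V E"
    and "critical_3_2 V E"
    and "card (odd_cycles E) \<ge> 3"
  shows "\<exists>H \<in> {mg_K2_4, mg_K4, mg_K3_221, mg_C4_2121}. \<exists>f P.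
           is_subdivision E H f P \<and>
           card {C \<in> odd_cycles E. C \<subseteq> subdivision_edges H P} \<ge> 2"
proof -
  note sg = assms(1)
  obtain C1 C2 C3 where C: "C1 \<in> odd_cycles E" "C2 \<in> odd_cycles E" "C3 \<in> odd_cycles E"
    "C1 \<noteq> C2" "C1 \<noteq> C3" "C2 \<noteq> C3" using three_elems[OF assms(3)] by blast
  obtain x1 where x1: "C1 = cycle_edges x1" "is_cycle E x1" "odd (length x1)" using C(1) unfolding odd_cycles_def by blast
  obtain x2 where x2: "C2 = cycle_edges x2" "is_cycle E x2" "odd (length x2)" using C(2) unfolding odd_cycles_def by blast
  obtain x3 where x3: "C3 = cycle_edges x3" "is_cycle E x3" "odd (length x3)" using C(3) unfolding odd_cycles_def by blast
  have ex: "\<exists>xs. is_cycle E xs \<and> odd (length xs)" using x1 by blast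
  have c1: "crit1 E" unfolding crit1_def using criticality(1)[OF sg assms(2) ex] .
  have c2: "crit2 E" unfolding crit2_def using criticality(2)[OF sg assms(2) ex] .
  define share where "share xs ys = (\<exists>u v. u \<noteq> v \<and> u \<in> set xs \<and> v \<in> set xs \<and> u \<in> set ys \<and> v \<in> set ys)"
    for xs ys :: "'a list"
  have disj: "cycle_edges xs \<inter> cycle_edges ys = {}" if cx: "is_cycle E xs" "is_cycle E ys" "\<not> share xs ys" for xs ys
  proof (rule ccontr)
    assume "cycle_edges xs \<inter> cycle_edges ys \<noteq> {}"
    then obtain e where e: "e \<in> cycle_edges xs" "e \<in> cycle_edges ys" by blast
    obtain u v where uv: "e = {u, v}" "u \<noteq> v" "u \<in> set xs" "v \<in> set xs" using cycle_edge_mem[OF cx(1) e(1)] by blast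
    obtain u' v' where uv': "e = {u', v'}" "u' \<in> set ys" "v' \<in> set ys" using cycle_edge_mem[OF cx(2) e(2)] by blast
    have "u \<in> set ys" "v \<in> set ys" using uv(1) uv' by (auto simp: doubleton_eq_iff)
    then show False using cx(3) uv unfolding share_def by blast
  qed
  have pair: "\<exists>xs ys. is_cycle E xs \<and> odd (length xs) \<and> is_cycle E ys \<and> odd (length ys) \<and>
                cycle_edges xs \<noteq> cycle_edges ys \<and> share xs ys"
  proof (rule ccontr)
    assume na: "\<not> ?thesis"
    have d12: "C1 \<inter> C2 = {}" using disj[OF x1(2) x2(2)] na x1 x2 C(4) by blast
    have d13: "C1 \<inter> C3 = {}" using disj[OF x1(2) x3(2)] na x1 x3 C(5) by blast
    have d23: "C2 \<inter> C3 = {}" using disj[OF x2(2) x3(2)] na x2 x3 C(6) by blast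
    define e where "e = {x1 ! 0, x1 ! 1}"
    have eC1: "e \<in> C1" unfolding e_def x1(1) by (rule cyc_two_edges(1)[OF x1(2)])
    have eE: "e \<in> E" using eC1 x1 cycle_edges_in by blast
    obtain f where f: "\<And>xs. is_cycle E xs \<Longrightarrow> odd (length xs) \<Longrightarrow> e \<in> cycle_edges xs \<or> f \<in> cycle_edges xs"
      using c1 eE unfolding crit1_def by blast
    have "f \<in> C2" using f[OF x2(2,3)] x2(1) eC1 d12 by blast
    moreover have "f \<in> C3" using f[OF x3(2,3)] x3(1) eC1 d13 by blast
    ultimately show False using d23 by blast
  qed
  then obtain xs ys where xy: "is_cycle E xs" "odd (length xs)" "is_cycle E ys" "odd (length ys)"
    "cycle_edges xs \<noteq> cycle_edges ys" "share xs ys" by blast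
  obtain u v where uv: "u \<noteq> v" "u \<in> set xs" "v \<in> set xs" "u \<in> set ys" "v \<in> set ys"
    using xy(6) unfolding share_def by blast
  show ?thesis
  proof (cases "cycle_edges ys \<subseteq> cycle_edges xs")
    case False
    then obtain g where "g \<in> cycle_edges ys" "g \<notin> cycle_edges xs" by blast
    then show ?thesis using from_pair[OF sg c1 c2 xy(1,2,3) _ _ uv] by blast
  next
    case True
    then have "\<not> cycle_edges xs \<subseteq> cycle_edges ys" using xy(5) by blast
    then obtain g where "g \<in> cycle_edges xs" "g \<notin> cycle_edges ys" by blast
    then show ?thesis using from_pair[OF sg c1 c2 xy(3,4,1) _ _ uv(1,4,5,2,3)] by blast
  qed
qed

end
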